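(* Let $p(x)=xK_1(x)+x^2K_0(x)$ for $x>0$ (so $\lim_{x\to0^+}p(x)=1$). Then $p$ is strictly increasing on $(0,1/2]$, strictly decreasing on $[(1+\sqrt{17})/8,\infty)$ with $p(x)\to0$ exponentially fast as $x\to\infty$, and $p''(x)<0$ for $x\in[1/2,(1+\sqrt{17})/8]$. Consequently $p$ has a unique global maximum at a point $x_0\in(1/2,(1+\sqrt{17})/8)$, which is the unique solution in that interval of $K_0(x)=xK_1(x)$, and $p(x_0)<1.07$ (numerically $x_0\approx0.5950$, $p(x_0)\approx1.061$).
   Context: $K_\nu$ denotes the modified Bessel function of the second kind of order $\nu$. *)

theory Defs
  imports "HOL-Analysis.Analysis"
begin

definition besselK :: "real \<Rightarrow> real \<Rightarrow> real" where
  "besselK \<nu> x = (LBINT t:{0..}. exp (- x * cosh t) * cosh (\<nu> * t))"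

definition pK :: "real \<Rightarrow> real" where
  "pK x = x * besselK 1 x + x\<^sup>2 * besselK 0 x"

end

theory Submission
  imports Defs
begin

lemma exp_ge_2t: "2 * t \<le> exp (t::real)"
proof -
  have "1 + t + t\<^sup>2/2 \<le> exp t" if "t \<ge> 0" using exp_lower_Taylor_quadratic that by simp
  moreover have "2*t \<le> 1 + t + t\<^sup>2/2"
  proof -
    have "0 \<le> (t-1)*(t-1)" by simp
    hence "0 \<le> t*t - 2*t + 1" by (simp add: algebra_simps)
    thus ?thesis by (simp add: power2_eq_square)
  qed
  ultimately show ?thesis
  proof (cases "t \<ge> 0")
    case False
    have "0 < exp t" by simp
    with False show ?thesis by linarith
  qed (use \<open>0 \<le> t \<Longrightarrow> 1 + t + t\<^sup>2/2 \<le> exp t\<close> \<open>2*t \<le> 1 + t + t\<^sup>2/2\<close> in linarith)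
qed

lemma cosh_ge_t: "t \<le> cosh (t::real)"
proof -
  have "exp (-t) > 0" by simp
  with exp_ge_2t[of t] have "2*t \<le> exp t + exp (-t)" by linarith
  thus ?thesis by (simp add: cosh_field_def field_simps)
qed

lemma exp_ge_pow: assumes "0 \<le> y" shows "y ^ k / fact k \<le> exp (y::real)"
proof -
  obtain s where "exp y = (\<Sum>m<Suc k. y ^ m / fact m) + exp s / fact (Suc k) * y ^ Suc k"
    using Maclaurin_exp_le[of y "Suc k"] by blast
  moreover have "y ^ k / fact k \<le> (\<Sum>m<Suc k. y ^ m / fact m)"
    using assms by (intro member_le_sum) auto
  moreover have "0 \<le> exp s / fact (Suc k) * y ^ Suc k" using assms by simp
  ultimately show ?thesis by linarith
qed

lemma integrable_exp_bound:
  fixes f :: "real \<Rightarrow> real"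
  assumes "continuous_on {a..} f" "\<And>t. t \<ge> a \<Longrightarrow> \<bar>f t\<bar> \<le> C * exp (-b*t)" "b > 0"
  shows "f integrable_on {a..}"
proof (rule measurable_bounded_by_integrable_imp_integrable_real)
  show "f \<in> borel_measurable (lebesgue_on {a..})"
    using assms(1) by (intro continuous_imp_measurable_on_sets_lebesgue) auto
  show "(\<lambda>t. C * exp (-b*t)) integrable_on {a..}"
    using integrable_on_cmult_left[OF integrable_on_exp_minus_to_infinity[OF assms(3)], of C] by simp
qed (use assms in auto)

lemma integral_exp_bound:
  fixes f :: "real \<Rightarrow> real"
  assumes "continuous_on {a..} f" "\<And>t. t \<ge> a \<Longrightarrow> \<bar>f t\<bar> \<le> C * exp (-b*t)" "b > 0"
  shows "\<bar>integral {a..} f\<bar> \<le> C * exp (-b*a) / b"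
proof -
  have i: "(\<lambda>t. C * exp (-b*t)) integrable_on {a..}"
    using integrable_on_cmult_left[OF integrable_on_exp_minus_to_infinity[OF assms(3)], of C] by simp
  have "\<bar>integral {a..} f\<bar> \<le> integral {a..} (\<lambda>t. C * exp (-b*t))"
    using integral_norm_bound_integral[OF integrable_exp_bound[OF assms] i] assms(2) by simp
  also have "\<dots> = C * exp (-b*a) / b"
    using integral_unique[OF has_integral_mult_right[OF has_integral_exp_minus_to_infinity[OF assms(3)], of C a]]
    by simp
  finally show ?thesis .
qed

lemma integral_tail_lim:
  fixes g :: "real \<Rightarrow> real"
  assumes cont: "continuous_on {a..} g" and bd: "\<And>t. t \<ge> a \<Longrightarrow> \<bar>g t\<bar> \<le> C * exp (-b*t)" and b: "b > 0"
  shows "((\<lambda>y. integral {a..y} g) \<longlongrightarrow> integral {a..} g) at_top"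
proof -
  have eq: "integral {a..y} g = integral {a..} g - integral {y..} g" if "y \<ge> a" for y
  proof -
    have i1: "g integrable_on {a..y}"
      by (rule integrable_continuous_interval) (use cont that in \<open>auto intro: continuous_on_subset\<close>)
    have i2: "g integrable_on {y..}"
      by (rule integrable_exp_bound[where C=C and b=b]) (use cont that bd b in \<open>auto intro: continuous_on_subset\<close>)
    have "{a..y} \<union> {y..} = {a..}" using that by auto
    moreover have "negligible ({a..y} \<inter> {y..})" 
      using that by (subgoal_tac "{a..y} \<inter> {y..} = {y}") auto
    ultimately show ?thesis using integral_Un[OF i1 i2] by simp
  qed
  have tl: "((\<lambda>y. integral {y..} g) \<longlongrightarrow> 0) at_top"
  proof (rule Lim_null_comparison)
    show "\<forall>\<^sub>F y in at_top. norm (integral {y..} g) \<le> C * exp (-b*y) / b"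
      using eventually_ge_at_top[of a]
    proof eventually_elim
      case (elim y)
      show ?case using integral_exp_bound[where C=C and b=b and a=y and f=g] cont bd b elim
        by (auto intro: continuous_on_subset)
    qed
    show "((\<lambda>y. C * exp (-b*y) / b) \<longlongrightarrow> 0) at_top" using b by real_asymp
  qed
  have "((\<lambda>y. integral {a..} g - integral {y..} g) \<longlongrightarrow> integral {a..} g - 0) at_top"
    by (intro tendsto_intros tl)
  then have "((\<lambda>y. integral {a..} g - integral {y..} g) \<longlongrightarrow> integral {a..} g) at_top" by simp
  then show ?thesis
    apply (rule Lim_transform_eventually)
    using eventually_ge_at_top[of a] by eventually_elim (simp add: eq)
qed

definition J :: "nat \<Rightarrow> real \<Rightarrow> real" where
  "J k x = integral {0..} (\<lambda>t. cosh t ^ k * exp (- x * cosh t))"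

lemma J_integrand_bound:
  fixes x t :: real
  assumes x: "x > 0" and t: "t \<ge> 0"
  shows "cosh t ^ k * exp (- x * cosh t) \<le> fact k * (2/x)^k * exp (-(x/2) * t)"
proof -
  let ?c = "cosh t"
  have c0: "?c > 0" by simp
  have "(x*?c/2)^k / fact k \<le> exp (x*?c/2)" by (rule exp_ge_pow) (use x c0 in simp)
  hence "(x/2)^k * ?c^k \<le> fact k * exp (x*?c/2)"
    by (simp add: field_simps power_mult_distrib)
  hence "?c^k \<le> fact k * (2/x)^k * exp (x*?c/2)"
    using x by (simp add: field_simps power_divide)
  hence "?c^k * exp (- x * ?c) \<le> fact k * (2/x)^k * exp (x*?c/2) * exp (- x * ?c)"
    by (intro mult_right_mono) auto
  also have "\<dots> = fact k * (2/x)^k * exp (-(x/2) * ?c)"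
    by (simp add: mult.assoc flip: exp_add)
  also have "\<dots> \<le> fact k * (2/x)^k * exp (-(x/2) * t)"
    using x cosh_ge_t[of t] by (intro mult_left_mono) auto
  finally show ?thesis .
qed

lemma J_integrable:
  fixes x :: real
  assumes "x > 0"
  shows "(\<lambda>t. cosh t ^ k * exp (- x * cosh t)) integrable_on {0..}"
  apply (rule integrable_exp_bound[where C="fact k * (2/x)^k" and b="x/2"])
  using assms J_integrand_bound by (auto intro!: continuous_intros)

lemma J_pos: fixes x :: real assumes "x > 0" shows "J k x \<ge> 0"
  unfolding J_def by (rule integral_nonneg[OF J_integrable[OF assms]]) auto

lemma exp_taylor2_bound: "\<bar>exp (-u) - 1 + u\<bar> \<le> u\<^sup>2/2 * exp \<bar>u\<bar>" for u :: real
proof -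
  obtain s where s: "\<bar>s\<bar> \<le> \<bar>-u\<bar>" "exp (-u) = (\<Sum>m<2. (-u) ^ m / fact m) + exp s / fact 2 * (-u) ^ 2"
    using Maclaurin_exp_le[of "-u" 2] by blast
  have e: "exp (-u) - 1 + u = exp s / 2 * u\<^sup>2" using s(2) by (simp add: numeral_2_eq_2)
  have "exp s \<le> exp \<bar>u\<bar>" using s(1) by simp
  hence "exp s / 2 * u\<^sup>2 \<le> exp \<bar>u\<bar> / 2 * u\<^sup>2" by (intro mult_right_mono) auto
  moreover have "exp s / 2 * u\<^sup>2 \<ge> 0" by simp
  ultimately show ?thesis unfolding e by (simp add: mult.commute)
qed

lemma J_quad:
  fixes x h :: real
  assumes x: "x > 0" and h: "\<bar>h\<bar> \<le> x/2"
  shows "\<bar>J k (x+h) - J k x + h * J (Suc k) x\<bar> \<le> h\<^sup>2/2 * J (k+2) (x/2)"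
proof -
  define f1 where "f1 = (\<lambda>t::real. cosh t ^ k * exp (- (x+h) * cosh t))"
  define f0 where "f0 = (\<lambda>t::real. cosh t ^ k * exp (- x * cosh t))"
  define f2 where "f2 = (\<lambda>t::real. cosh t ^ Suc k * exp (- x * cosh t))"
  define G where "G = (\<lambda>t::real. cosh t ^ (k+2) * exp (- (x/2) * cosh t))"
  have xh: "x + h > 0" using x h by linarith
  have i1: "f1 integrable_on {0..}" unfolding f1_def by (rule J_integrable[OF xh])
  have i0: "f0 integrable_on {0..}" unfolding f0_def by (rule J_integrable[OF x])
  have i2: "f2 integrable_on {0..}" unfolding f2_def by (rule J_integrable[OF x])
  have iG: "G integrable_on {0..}" unfolding G_def by (rule J_integrable) (use x in simp)
  have i2': "(\<lambda>t. h * f2 t) integrable_on {0..}" using integrable_on_cmult_left[OF i2, of h] by simp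
  have i10: "(\<lambda>t. f1 t - f0 t) integrable_on {0..}" by (rule integrable_diff[OF i1 i0])
  have eq: "J k (x+h) - J k x + h * J (Suc k) x = integral {0..} (\<lambda>t. f1 t - f0 t + h * f2 t)"
    unfolding J_def
    by (subst integral_add[OF i10 i2'], subst integral_diff[OF i1 i0]) (simp add: f1_def f0_def f2_def)
  have pt: "norm (f1 t - f0 t + h * f2 t) \<le> h\<^sup>2/2 * G t" if "t \<in> {0..}" for t
  proof -
    let ?c = "cosh t"
    have c0: "?c > 0" by simp
    have "f1 t - f0 t + h * f2 t = ?c ^ k * exp (- x * ?c) * (exp (-(h * ?c)) - 1 + h * ?c)"
      unfolding f1_def f0_def f2_def by (simp add: algebra_simps flip: exp_add)
    hence "\<bar>f1 t - f0 t + h * f2 t\<bar> = ?c ^ k * exp (- x * ?c) * \<bar>exp (-(h * ?c)) - 1 + h * ?c\<bar>"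
      by (simp add: abs_mult)
    also have "\<dots> \<le> ?c ^ k * exp (- x * ?c) * ((h * ?c)\<^sup>2/2 * exp \<bar>h * ?c\<bar>)"
      by (intro mult_left_mono exp_taylor2_bound) auto
    also have "\<dots> = h\<^sup>2/2 * ?c ^ (k+2) * (exp (- x * ?c) * exp (\<bar>h\<bar> * ?c))"
      using c0 by (simp add: abs_mult power2_eq_square algebra_simps)
    also have "exp (- x * ?c) * exp (\<bar>h\<bar> * ?c) \<le> exp (- (x/2) * ?c)"
    proof -
      have "- x * ?c + \<bar>h\<bar> * ?c \<le> - (x/2) * ?c" using h c0
        by (simp add: algebra_simps mult_right_mono)
      thus ?thesis by (simp flip: exp_add)
    qed
    hence "h\<^sup>2/2 * ?c ^ (k+2) * (exp (- x * ?c) * exp (\<bar>h\<bar> * ?c)) \<le> h\<^sup>2/2 * ?c ^ (k+2) * exp (- (x/2) * ?c)"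
      by (intro mult_left_mono) auto
    finally show ?thesis by (simp add: G_def mult.assoc)
  qed
  have "\<bar>integral {0..} (\<lambda>t. f1 t - f0 t + h * f2 t)\<bar> \<le> integral {0..} (\<lambda>t. h\<^sup>2/2 * G t)"
  proof -
    have iG2: "(\<lambda>t. h\<^sup>2/2 * G t) integrable_on {0..}" using integrable_on_cmult_left[OF iG, of "h\<^sup>2/2"] by simp
    show ?thesis using integral_norm_bound_integral[OF integrable_add[OF i10 i2'] iG2 pt] by simp
  qed
  also have "\<dots> = h\<^sup>2/2 * J (k+2) (x/2)" unfolding G_def J_def by simp
  finally show ?thesis using eq by simp
qed

lemma deriv_quad:
  fixes f :: "real \<Rightarrow> real"
  assumes d: "d > 0" and bd: "\<And>h. \<bar>h\<bar> \<le> d \<Longrightarrow> \<bar>f (x+h) - f x - h*D\<bar> \<le> C*h\<^sup>2"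
  shows "(f has_real_derivative D) (at x)"
  unfolding DERIV_def
proof -
  have "((\<lambda>h. (f (x + h) - f x) / h - D) \<longlongrightarrow> 0) (at 0)"
  proof (rule Lim_null_comparison)
    show "\<forall>\<^sub>F h in at 0. norm ((f (x + h) - f x) / h - D) \<le> \<bar>C\<bar> * \<bar>h\<bar>"
    proof -
      have "\<forall>\<^sub>F h in at 0. \<bar>h\<bar> < d \<and> h \<noteq> 0"
        using d by (auto simp: eventually_at dist_real_def intro!: exI[of _ d])
      thus ?thesis
      proof eventually_elim
        case (elim h)
        have "(f (x + h) - f x) / h - D = (f (x+h) - f x - h*D) / h" using elim by (simp add: field_simps)
        hence "norm ((f (x + h) - f x) / h - D) = \<bar>f (x+h) - f x - h*D\<bar> / \<bar>h\<bar>" by (simp add: abs_divide)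
        also have "\<dots> \<le> C*h\<^sup>2 / \<bar>h\<bar>" using bd[of h] elim by (intro divide_right_mono) auto
        also have "\<dots> = C * \<bar>h\<bar>" using elim by (simp add: power2_eq_square field_simps abs_mult_self_eq flip: abs_mult)
        also have "\<dots> \<le> \<bar>C\<bar> * \<bar>h\<bar>" by (intro mult_right_mono) auto
        finally show ?case .
      qed
    qed
    show "((\<lambda>h. \<bar>C\<bar> * \<bar>h\<bar>) \<longlongrightarrow> 0) (at 0)"
      by (rule tendsto_eq_intros | simp)+
  qed
  hence "((\<lambda>h. (f (x + h) - f x) / h - D + D) \<longlongrightarrow> 0 + D) (at 0)" by (intro tendsto_intros)
  thus "((\<lambda>h. (f (x + h) - f x) / h) \<longlongrightarrow> D) (at 0)" by simp
qed

lemma J_deriv: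
  fixes x :: real
  assumes x: "x > 0"
  shows "(J k has_real_derivative - J (Suc k) x) (at x)"
proof (rule deriv_quad[where d="x/2" and C="J (k+2) (x/2) / 2"])
  show "x/2 > 0" using x by simp
  fix h :: real assume "\<bar>h\<bar> \<le> x/2"
  from J_quad[OF x this, of k] show "\<bar>J k (x+h) - J k x - h * - J (Suc k) x\<bar> \<le> J (k+2) (x/2) / 2 * h\<^sup>2"
    by (simp add: algebra_simps)
qed

lemma J_cont: "x > 0 \<Longrightarrow> isCont (J k) x"
  using J_deriv DERIV_isCont by blast

lemma improper_FTC:
  fixes F g :: "real \<Rightarrow> real"
  assumes cont: "continuous_on {a..} g" and bd: "\<And>t. t \<ge> a \<Longrightarrow> \<bar>g t\<bar> \<le> C * exp (-b*t)" and b: "b > 0"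
    and der: "\<And>t. t \<ge> a \<Longrightarrow> (F has_real_derivative g t) (at t)"
    and lim: "(F \<longlongrightarrow> L) at_top"
  shows "integral {a..} g = L - F a"
proof -
  have FT: "integral {a..y} g = F y - F a" if "y \<ge> a" for y
  proof (rule integral_unique, rule fundamental_theorem_of_calculus[OF that])
    fix t assume "t \<in> {a..y}"
    thus "(F has_vector_derivative g t) (at t within {a..y})"
      using der[of t] by (auto simp: has_real_derivative_iff_has_vector_derivative intro: has_vector_derivative_at_within)
  qed
  have ev: "\<forall>\<^sub>F y in at_top. F y - F a = integral {a..y} g"
    using eventually_ge_at_top[of a] by eventually_elim (simp add: FT)
  have "((\<lambda>y. F y - F a) \<longlongrightarrow> L - F a) at_top" by (intro tendsto_intros lim)
  hence "((\<lambda>y. integral {a..y} g) \<longlongrightarrow> L - F a) at_top" using ev by (rule Lim_transform_eventually)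
  moreover have "((\<lambda>y. integral {a..y} g) \<longlongrightarrow> integral {a..} g) at_top"
    by (rule integral_tail_lim[OF cont bd b])
  ultimately show ?thesis using tendsto_unique[OF trivial_limit_at_top_linorder] by metis
qed

lemma exp_cosh_lim:
  fixes x :: real assumes x: "x > 0"
  shows "((\<lambda>y. cosh y ^ k * exp (- x * cosh y)) \<longlongrightarrow> 0) at_top"
proof (rule Lim_null_comparison)
  show "\<forall>\<^sub>F y in at_top. norm (cosh y ^ k * exp (- x * cosh y)) \<le> fact k * (2/x)^k * exp (-(x/2) * y)"
    using eventually_ge_at_top[of 0] by eventually_elim (use J_integrand_bound[OF x] in auto)
  show "((\<lambda>y. fact k * (2/x)^k * exp (-(x/2) * y)) \<longlongrightarrow> 0) at_top" using x by real_asymp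
qed

lemma sinh_integral:
  fixes x :: real assumes x: "x > 0"
  shows "integral {0..} (\<lambda>t. sinh t * exp (- x * cosh t)) = exp (-x) / x"
proof -
  have "integral {0..} (\<lambda>t. sinh t * exp (- x * cosh t)) = 0 - (- exp (- x * cosh 0) / x)"
  proof (rule improper_FTC[where C="2/x" and b="x/2"])
    show "continuous_on {0..} (\<lambda>t. sinh t * exp (- x * cosh t))" by (intro continuous_intros)
    show "x/2 > 0" using x by simp
    fix t :: real assume t: "t \<ge> 0"
    have "\<bar>sinh t * exp (- x * cosh t)\<bar> \<le> cosh t ^ 1 * exp (- x * cosh t)"
      using t by (simp add: abs_mult sinh_le_cosh_real)
    also have "\<dots> \<le> 2/x * exp (-(x/2) * t)" using J_integrand_bound[OF x t, of 1] by simp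
    finally show "\<bar>sinh t * exp (- x * cosh t)\<bar> \<le> 2/x * exp (-(x/2) * t)" .
    show "((\<lambda>t. - exp (- x * cosh t) / x) has_real_derivative sinh t * exp (- x * cosh t)) (at t)"
      using x by (auto intro!: derivative_eq_intros simp: field_simps less_imp_neq[OF x, symmetric])
  next
    have "((\<lambda>t. - (cosh t ^ 0 * exp (- x * cosh t)) / x) \<longlongrightarrow> - 0 / x) at_top"
      by (intro tendsto_intros exp_cosh_lim[OF x]) (use x in simp)
    thus "((\<lambda>t. - exp (- x * cosh t) / x) \<longlongrightarrow> 0) at_top" by simp
  qed
  thus ?thesis by simp
qed

lemma J_recur:
  fixes x :: real assumes x: "x > 0"
  shows "J 1 x = x * (J 2 x - J 0 x)"
proof -
  define g where "g = (\<lambda>t::real. cosh t * exp (- x * cosh t) - x * (sinh t ^ 2 * exp (- x * cosh t)))"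
  have "integral {0..} g = 0 - sinh 0 * exp (- x * cosh 0)"
  proof (rule improper_FTC[where C="2/x + x * (8/x^2)" and b="x/2"])
    show "continuous_on {0..} g" unfolding g_def by (intro continuous_intros)
    show "x/2 > 0" using x by simp
    fix t :: real assume t: "t \<ge> 0"
    have s2: "sinh t ^ 2 \<le> cosh t ^ 2" using cosh_square_eq[of t] by simp
    have "\<bar>g t\<bar> \<le> cosh t ^ 1 * exp (- x * cosh t) + x * (cosh t ^ 2 * exp (- x * cosh t))"
      unfolding g_def using x s2 by (intro order.trans[OF abs_triangle_ineq4]) (auto simp: abs_mult intro!: add_mono mult_left_mono mult_right_mono)
    also have "\<dots> \<le> 2/x * exp (-(x/2) * t) + x * (8/x^2 * exp (-(x/2) * t))"
      using J_integrand_bound[OF x t, of 1] J_integrand_bound[OF x t, of 2] x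
      by (intro add_mono mult_left_mono) (auto simp: power2_eq_square)
    finally show "\<bar>g t\<bar> \<le> (2/x + x * (8/x^2)) * exp (-(x/2) * t)" by (simp add: algebra_simps)
    show "((\<lambda>t. sinh t * exp (- x * cosh t)) has_real_derivative g t) (at t)"
      unfolding g_def by (auto intro!: derivative_eq_intros simp: power2_eq_square algebra_simps)
  next
    show "((\<lambda>t. sinh t * exp (- x * cosh t)) \<longlongrightarrow> 0) at_top"
    proof (rule Lim_null_comparison)
      show "\<forall>\<^sub>F y in at_top. norm (sinh y * exp (- x * cosh y)) \<le> cosh y ^ 1 * exp (- x * cosh y)"
        using eventually_ge_at_top[of 0] by eventually_elim (auto simp: abs_mult sinh_le_cosh_real)
      show "((\<lambda>y. cosh y ^ 1 * exp (- x * cosh y)) \<longlongrightarrow> 0) at_top" by (rule exp_cosh_lim[OF x])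
    qed
  qed
  hence g0: "integral {0..} g = 0" by simp
  have i1: "(\<lambda>t. cosh t ^ 1 * exp (- x * cosh t)) integrable_on {0..}" by (rule J_integrable[OF x])
  have i2: "(\<lambda>t. cosh t ^ 2 * exp (- x * cosh t)) integrable_on {0..}" by (rule J_integrable[OF x])
  have i0: "(\<lambda>t. cosh t ^ 0 * exp (- x * cosh t)) integrable_on {0..}" by (rule J_integrable[OF x])
  have ss: "sinh t ^ 2 * exp (- x * cosh t) = cosh t ^ 2 * exp (- x * cosh t) - cosh t ^ 0 * exp (- x * cosh t)" for t
    using cosh_square_eq[of t] by (simp add: algebra_simps)
  have i3: "(\<lambda>t. sinh t ^ 2 * exp (- x * cosh t)) integrable_on {0..}"
    unfolding ss by (rule integrable_diff[OF i2 i0])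
  have "integral {0..} (\<lambda>t. sinh t ^ 2 * exp (- x * cosh t)) = J 2 x - J 0 x"
    unfolding ss J_def by (rule integral_diff[OF i2 i0])
  moreover have "integral {0..} g = J 1 x - x * integral {0..} (\<lambda>t. sinh t ^ 2 * exp (- x * cosh t))"
  proof -
    have "integral {0..} g = integral {0..} (\<lambda>t. cosh t ^ 1 * exp (- x * cosh t)) - integral {0..} (\<lambda>t. x * (sinh t ^ 2 * exp (- x * cosh t)))"
      unfolding g_def using integral_diff[OF i1 integrable_on_cmult_left[OF i3, of x]] by simp
    thus ?thesis unfolding J_def by simp
  qed
  ultimately show ?thesis using g0 by simp
qed

definition A :: "real \<Rightarrow> real" where
  "A x = integral {0..} (\<lambda>t. exp (-t) * exp (- x * cosh t))"

lemma A_integrable: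
  fixes x :: real assumes x: "x > 0"
  shows "(\<lambda>t. exp (-t) * exp (- x * cosh t)) integrable_on {0..}"
  apply (rule integrable_exp_bound[where C=1 and b=1])
  using x by (auto intro!: continuous_intros mult_left_le_one_le)

lemma J1_decomp:
  fixes x :: real assumes x: "x > 0"
  shows "J 1 x = exp (-x) / x + A x"
proof -
  have isn: "(\<lambda>t. sinh t * exp (- x * cosh t)) integrable_on {0..}"
    apply (rule integrable_exp_bound[where C="2/x" and b="x/2"])
    using x J_integrand_bound[OF x, of _ 1] by (auto intro!: continuous_intros simp: abs_mult intro: order.trans[OF mult_right_mono[OF sinh_le_cosh_real]])
  have "J 1 x = integral {0..} (\<lambda>t. sinh t * exp (- x * cosh t) + exp (-t) * exp (- x * cosh t))"
    unfolding J_def by (rule integral_cong) (simp add: algebra_simps flip: cosh_minus_sinh)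
  also have "\<dots> = exp (-x) / x + A x"
    unfolding A_def by (subst integral_add[OF isn A_integrable[OF x]]) (simp add: sinh_integral[OF x, simplified])
  finally show ?thesis .
qed

lemma A_bounds:
  fixes x :: real assumes x: "x > 0"
  shows "0 \<le> A x" "A x \<le> 1"
proof -
  show "0 \<le> A x" unfolding A_def by (rule integral_nonneg[OF A_integrable[OF x]]) auto
  have "A x \<le> integral {0..} (\<lambda>t. exp (-1*t))"
    unfolding A_def using x
    by (intro integral_le A_integrable integrable_on_exp_minus_to_infinity) (auto intro!: mult_left_le_one_le)
  also have "\<dots> = 1" using integral_unique[OF has_integral_exp_minus_to_infinity[of 1 0]] by simp
  finally show "A x \<le> 1" .
qed

lemma bridge:
  fixes f :: "real \<Rightarrow> real"
  assumes cont: "continuous_on {0..} f" and int: "f integrable_on {0..}" and nn: "\<And>t. t \<ge> 0 \<Longrightarrow> f t \<ge> 0"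
  shows "(LBINT t:{0..}. f t) = integral {0..} f"
proof -
  have "f absolutely_integrable_on {0..}" by (rule nonnegative_absolutely_integrable_1) (use int nn in auto)
  hence "integrable lebesgue (\<lambda>t. indicator {0..} t *\<^sub>R f t)" by (simp add: set_integrable_def)
  moreover have "(\<lambda>t. indicator {0..} t *\<^sub>R f t) \<in> borel_measurable lborel"
    using borel_measurable_continuous_on_indicator[of "{0..}" f] cont by simp
  ultimately have "integrable lborel (\<lambda>t. indicator {0..} t *\<^sub>R f t)" using integrable_completion by blast
  hence "set_integrable lborel {0..} f" by (simp add: set_integrable_def)
  thus ?thesis by (rule set_borel_integral_eq_integral(2))
qed

lemma besselK_J:
  fixes x :: real assumes x: "x > 0"
  shows "besselK 0 x = J 0 x" "besselK 1 x = J 1 x"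
proof -
  have "besselK 0 x = (LBINT t:{0..}. cosh t ^ 0 * exp (- x * cosh t))" by (simp add: besselK_def)
  also have "\<dots> = J 0 x" unfolding J_def by (rule bridge[OF _ J_integrable[OF x]]) (auto intro!: continuous_intros)
  finally show "besselK 0 x = J 0 x" .
  have "besselK 1 x = (LBINT t:{0..}. cosh t ^ 1 * exp (- x * cosh t))" by (simp add: besselK_def mult.commute)
  also have "\<dots> = J 1 x" unfolding J_def by (rule bridge[OF _ J_integrable[OF x]]) (auto intro!: continuous_intros)
  finally show "besselK 1 x = J 1 x" .
qed

lemma pK_J: "x > 0 \<Longrightarrow> pK x = x * J 1 x + x\<^sup>2 * J 0 x"
  by (simp add: pK_def besselK_J)

lemma pK_alt: assumes x: "x > 0" shows "pK x = exp (-x) + x * A x + x\<^sup>2 * J 0 x"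
  unfolding pK_J[OF x] J1_decomp[OF x] using x by (simp add: field_simps)

definition P1 :: "real \<Rightarrow> real" where "P1 x = x * J 0 x - x\<^sup>2 * J 1 x"
definition P2 :: "real \<Rightarrow> real" where "P2 x = (1 + x\<^sup>2) * J 0 x - 2 * x * J 1 x"

lemma J2_eq: "x > 0 \<Longrightarrow> J 2 x = J 0 x + J 1 x / x"
  using J_recur[of x] by (simp add: field_simps)

lemma pK_deriv:
  fixes x :: real assumes x: "x > 0"
  shows "(pK has_real_derivative P1 x) (at x)"
proof -
  have "((\<lambda>y. y * J 1 y + y\<^sup>2 * J 0 y) has_real_derivative
          1 * J 1 x + x * (- J 2 x) + (2 * x) * J 0 x + x\<^sup>2 * (- J 1 x)) (at x)"
    by (auto intro!: derivative_eq_intros J_deriv[OF x, THEN DERIV_cong] simp: numeral_2_eq_2)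
  also have "1 * J 1 x + x * (- J 2 x) + (2 * x) * J 0 x + x\<^sup>2 * (- J 1 x) = P1 x"
    using x by (simp add: J2_eq P1_def field_simps power2_eq_square)
  finally show ?thesis
    by (rule has_field_derivative_transform_within_open[where S="{0<..}"]) (use x pK_J in auto)
qed

lemma P1_deriv:
  fixes x :: real assumes x: "x > 0"
  shows "(P1 has_real_derivative P2 x) (at x)"
proof -
  have "((\<lambda>y. y * J 0 y - y\<^sup>2 * J 1 y) has_real_derivative
          1 * J 0 x + x * (- J 1 x) - ((2 * x) * J 1 x + x\<^sup>2 * (- J 2 x))) (at x)"
    by (auto intro!: derivative_eq_intros J_deriv[OF x, THEN DERIV_cong] simp: numeral_2_eq_2)
  also have "1 * J 0 x + x * (- J 1 x) - ((2 * x) * J 1 x + x\<^sup>2 * (- J 2 x)) = P2 x"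
    using x by (simp add: J2_eq P2_def field_simps power2_eq_square)
  finally show ?thesis unfolding P1_def[abs_def] .
qed

lemma J0_le: fixes x :: real assumes x: "x > 0" shows "J 0 x \<le> 1/x"
proof -
  have "J 0 x \<le> integral {0..} (\<lambda>t. exp (-x*t))"
    unfolding J_def using x cosh_ge_t
    by (intro integral_le J_integrable integrable_on_exp_minus_to_infinity) (auto simp: mult_left_mono)
  also have "\<dots> = 1/x" using integral_unique[OF has_integral_exp_minus_to_infinity[OF x, of 0]] by simp
  finally show ?thesis .
qed

lemma pK_lim0: "(pK \<longlongrightarrow> 1) (at_right 0)"
proof -
  have ev: "\<forall>\<^sub>F x in at_right 0. pK x = exp (-x) + (x * A x + x\<^sup>2 * J 0 x)"
    by (rule eventually_at_right_less[THEN eventually_mono]) (simp add: pK_alt)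
  have r: "((\<lambda>x::real. x * A x + x\<^sup>2 * J 0 x) \<longlongrightarrow> 0) (at_right 0)"
  proof (rule Lim_null_comparison)
    show "\<forall>\<^sub>F x in at_right 0. norm (x * A x + x\<^sup>2 * J 0 x) \<le> 2 * x"
    proof (rule eventually_at_right_less[THEN eventually_mono])
      fix x :: real assume x: "0 < x"
      have "x * A x \<le> x" using A_bounds[OF x] x by (simp add: mult_left_le)
      moreover have "x\<^sup>2 * J 0 x \<le> x\<^sup>2 * (1/x)" using J0_le[OF x] x by (intro mult_left_mono) auto
      moreover have "x\<^sup>2 * (1/x) = x" using x by (simp add: power2_eq_square)
      moreover have "0 \<le> x * A x" "0 \<le> x\<^sup>2 * J 0 x" using A_bounds[OF x] J_pos[OF x] x by auto
      ultimately show "norm (x * A x + x\<^sup>2 * J 0 x) \<le> 2 * x" by simp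
    qed
    show "((\<lambda>x::real. 2 * x) \<longlongrightarrow> 0) (at_right 0)" by (rule tendsto_eq_intros | simp)+
  qed
  have "((\<lambda>x::real. exp (-x) + (x * A x + x\<^sup>2 * J 0 x)) \<longlongrightarrow> exp (-0) + 0) (at_right 0)"
    by (intro tendsto_intros r)
  hence "((\<lambda>x::real. exp (-x) + (x * A x + x\<^sup>2 * J 0 x)) \<longlongrightarrow> 1) (at_right 0)" by simp
  thus ?thesis using ev by (rule Lim_transform_eventually[OF _ eventually_mono]) simp
qed

lemma A_le_exp: fixes x :: real assumes x: "x > 0" shows "A x \<le> exp (-x)"
proof -
  have ie: "(\<lambda>t. exp (-x) * exp (-1*t)) integrable_on {0..}"
    using integrable_on_cmult_left[OF integrable_on_exp_minus_to_infinity[of 1 0], of "exp(-x)"] by simp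
  have "A x \<le> integral {0..} (\<lambda>t. exp (-x) * exp (-1*t))"
    unfolding A_def using x
    by (intro integral_le[OF A_integrable[OF x] ie]) (auto simp: mult.commute cosh_real_ge_1 intro!: mult_left_mono)
  also have "\<dots> = exp (-x)" using integral_unique[OF has_integral_mult_right[OF has_integral_exp_minus_to_infinity[of 1 0], of "exp (-x)"]] by simp
  finally show ?thesis .
qed

lemma J0_le_exp: fixes x :: real assumes x: "x \<ge> 1" shows "J 0 x \<le> exp 1 * J 0 1 * exp (-x)"
proof -
  have pt: "cosh t ^ 0 * exp (- x * cosh t) \<le> (exp 1 * exp (-x)) * (cosh t ^ 0 * exp (- 1 * cosh t))" for t
  proof -
    have "- x * cosh t \<le> 1 + (-x) + (- 1 * cosh t)"
    proof -
      have "(x - 1) * 1 \<le> (x - 1) * cosh t" using x by (intro mult_left_mono) (auto simp: cosh_real_ge_1)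
      thus ?thesis by (simp add: algebra_simps)
    qed
    thus ?thesis by (simp flip: exp_add add: mult.assoc)
  qed
  have ie: "(\<lambda>t. (exp 1 * exp (-x)) * (cosh t ^ 0 * exp (- 1 * cosh t))) integrable_on {0..}"
    using integrable_on_cmult_left[OF J_integrable[of 1 0], of "exp 1 * exp (-x)"] by simp
  have "J 0 x \<le> integral {0..} (\<lambda>t. (exp 1 * exp (-x)) * (cosh t ^ 0 * exp (- 1 * cosh t)))"
    unfolding J_def using x pt
    by (intro integral_le[OF J_integrable ie]) auto
  also have "\<dots> = exp 1 * J 0 1 * exp (-x)" unfolding J_def by simp
  finally show ?thesis .
qed

lemma pK_exp_bound: "\<forall>\<^sub>F x in at_top. \<bar>pK x\<bar> \<le> 1 * exp (- (1/2) * x)"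
proof -
  define K where "K = exp 1 * J 0 1"
  have ev1: "\<forall>\<^sub>F x in at_top. (1 + x + K * x\<^sup>2) * exp (-x) \<le> exp (- (1/2) * x)" by real_asymp
  show ?thesis using ev1 eventually_ge_at_top[of 1]
  proof eventually_elim
    case (elim x)
    hence x: "x > 0" by simp
    have "0 \<le> pK x" using pK_alt[OF x] A_bounds[OF x] J_pos[OF x] x by (simp add: add_nonneg_nonneg)
    moreover have "pK x \<le> (1 + x + K * x\<^sup>2) * exp (-x)"
    proof -
      have "x * A x \<le> x * exp (-x)" using A_le_exp[OF x] x by (intro mult_left_mono) auto
      moreover have "x\<^sup>2 * J 0 x \<le> x\<^sup>2 * (K * exp (-x))" using J0_le_exp[of x] elim K_def by (intro mult_left_mono) auto
      ultimately show ?thesis using pK_alt[OF x] by (simp add: algebra_simps)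
    qed
    ultimately show ?case using elim by simp
  qed
qed

lemma pK_lim_top: "(pK \<longlongrightarrow> 0) at_top"
proof (rule Lim_null_comparison)
  show "\<forall>\<^sub>F x in at_top. norm (pK x) \<le> 1 * exp (- (1/2) * x)" using pK_exp_bound by simp
  show "((\<lambda>x::real. 1 * exp (- (1/2) * x)) \<longlongrightarrow> 0) at_top" by real_asymp
qed

lemma integral_pos_lemma:
  fixes f :: "real \<Rightarrow> real"
  assumes cont: "continuous_on {0..} f" and int: "f integrable_on {0..}"
    and nn: "\<And>t. t \<ge> 0 \<Longrightarrow> f t \<ge> 0" and lb: "\<And>t. t \<in> {1..2} \<Longrightarrow> f t \<ge> m"
  shows "integral {0..} f \<ge> m"
proof -
  have i12: "f integrable_on {1..2}" by (rule integrable_continuous_interval) (rule continuous_on_subset[OF cont], auto)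
  have "m = integral {1..2::real} (\<lambda>t. m)" by simp
  also have "\<dots> \<le> integral {1..2} f" by (rule integral_le[OF _ i12]) (use lb in auto)
  also have "\<dots> \<le> integral {0..} f" by (rule integral_subset_le[OF _ i12 int]) (use nn in auto)
  finally show ?thesis .
qed

lemma J0_pos: fixes x :: real assumes x: "x > 0" shows "J 0 x > 0"
proof -
  have "J 0 x \<ge> exp (- x * cosh 2)"
    unfolding J_def
  proof (rule integral_pos_lemma[OF _ J_integrable[OF x]])
    fix t :: real assume t: "t \<in> {1..2}"
    have "cosh t \<le> cosh 2" using t by (subst cosh_real_nonneg_le_iff) auto
    thus "exp (- x * cosh 2) \<le> cosh t ^ 0 * exp (- x * cosh t)" using x by (simp add: mult_left_mono)
  qed (auto intro!: continuous_intros)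
  moreover have "exp (- x * cosh 2) > 0" by simp
  ultimately show ?thesis by linarith
qed

lemma J1_gt_J0: fixes x :: real assumes x: "x > 0" shows "J 1 x > J 0 x"
proof -
  have c1: "cosh (1::real) > 1" using cosh_real_nonneg_less_iff[of 0 1] by simp
  have i: "(\<lambda>t. cosh t ^ 1 * exp (- x * cosh t) - cosh t ^ 0 * exp (- x * cosh t)) integrable_on {0..}"
    by (rule integrable_diff[OF J_integrable[OF x] J_integrable[OF x]])
  have "integral {0..} (\<lambda>t. cosh t ^ 1 * exp (- x * cosh t) - cosh t ^ 0 * exp (- x * cosh t)) \<ge> (cosh 1 - 1) * exp (- x * cosh 2)"
  proof (rule integral_pos_lemma[OF _ i])
    fix t :: real assume t: "t \<in> {1..2}"
    have "cosh t \<le> cosh 2" using t by (subst cosh_real_nonneg_le_iff) auto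
    hence e: "exp (- x * cosh 2) \<le> exp (- x * cosh t)" using x by (simp add: mult_left_mono)
    have "cosh 1 \<le> cosh t" using t by (subst cosh_real_nonneg_le_iff) auto
    hence "(cosh 1 - 1) * exp (- x * cosh 2) \<le> (cosh t - 1) * exp (- x * cosh t)"
      using c1 e by (intro mult_mono) auto
    thus "(cosh 1 - 1) * exp (- x * cosh 2) \<le> cosh t ^ 1 * exp (- x * cosh t) - cosh t ^ 0 * exp (- x * cosh t)"
      by (simp add: algebra_simps)
  next
    fix t :: real assume "t \<ge> 0"
    show "0 \<le> cosh t ^ 1 * exp (- x * cosh t) - cosh t ^ 0 * exp (- x * cosh t)"
      using cosh_real_ge_1[of t] by (simp add: algebra_simps)
  qed (auto intro!: continuous_intros)
  moreover have "integral {0..} (\<lambda>t. cosh t ^ 1 * exp (- x * cosh t) - cosh t ^ 0 * exp (- x * cosh t)) = J 1 x - J 0 x"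
    unfolding J_def by (rule integral_diff[OF J_integrable[OF x] J_integrable[OF x]])
  moreover have "(cosh 1 - 1) * exp (- x * cosh 2) > 0" using c1 by simp
  ultimately show ?thesis by linarith
qed

definition R :: "real \<Rightarrow> real" where "R x = x * J 1 x / J 0 x"

lemma R_gt: fixes x :: real assumes x: "x > 0" shows "R x > x"
proof -
  have "x * J 0 x < x * J 1 x" using J1_gt_J0[OF x] x by simp
  thus ?thesis unfolding R_def using J0_pos[OF x] by (simp add: field_simps)
qed

lemma R_deriv: fixes x :: real assumes x: "x > 0" shows "(R has_real_derivative (R x ^ 2 - x ^ 2) / x) (at x)"
proof -
  have j0: "J 0 x \<noteq> 0" using J0_pos[OF x] by simp
  have d1: "((\<lambda>y. y * J 1 y) has_real_derivative (1 * J 1 x + (- J 2 x) * x)) (at x)"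
    using DERIV_mult[OF DERIV_ident J_deriv[OF x, of 1]] by (simp add: numeral_2_eq_2)
  have d2: "((\<lambda>y. y * J 1 y / J 0 y) has_real_derivative
      ((1 * J 1 x + (- J 2 x) * x) * J 0 x - x * J 1 x * (- J (Suc 0) x)) / (J 0 x * J 0 x)) (at x)"
    by (rule DERIV_divide[OF d1 J_deriv[OF x, of 0] j0])
  have "((1 * J 1 x + (- J 2 x) * x) * J 0 x - x * J 1 x * (- J (Suc 0) x)) / (J 0 x * J 0 x) = (R x ^ 2 - x ^ 2) / x"
    unfolding R_def using x j0 by (simp add: J2_eq field_simps power2_eq_square)
  with d2 show ?thesis unfolding R_def[abs_def] by simp
qed

lemma R_cont: "x > 0 \<Longrightarrow> isCont R x" using R_deriv DERIV_isCont by blast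

lemma R_mono: fixes x y :: real assumes "0 < x" "x < y" shows "R x < R y"
proof (rule DERIV_pos_imp_increasing[OF assms(2)])
  fix z assume z: "x \<le> z" "z \<le> y"
  hence z0: "z > 0" using assms by linarith
  have "R z ^ 2 > z ^ 2" using R_gt[OF z0] z0 by (simp add: power_strict_mono)
  thus "\<exists>d. (R has_real_derivative d) (at z) \<and> d > 0" using R_deriv[OF z0] z0 by (intro exI[of _ "(R z ^ 2 - z ^ 2) / z"]) auto
qed

lemma R_mono_le: fixes x y :: real shows "0 < x \<Longrightarrow> x \<le> y \<Longrightarrow> R x \<le> R y"
  using R_mono[of x y] by (cases "x = y") auto

lemma P1_R: fixes x :: real assumes x: "x > 0" shows "P1 x = x * J 0 x * (1 - R x)"
  unfolding P1_def R_def using J0_pos[OF x] by (simp add: field_simps power2_eq_square)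

lemma P2_R: fixes x :: real assumes x: "x > 0" shows "P2 x = J 0 x * (1 + x\<^sup>2 - 2 * R x)"
  unfolding P2_def R_def using J0_pos[OF x] by (simp add: field_simps power2_eq_square)

lemma P1_pos: "x > 0 \<Longrightarrow> R x < 1 \<Longrightarrow> P1 x > 0"
  using J0_pos[of x] by (simp add: P1_R)

lemma P1_neg: "x > 0 \<Longrightarrow> R x > 1 \<Longrightarrow> P1 x < 0"
  using J0_pos[of x] by (simp add: P1_R mult_pos_neg)

lemma sqrt17: "404/100 < sqrt (17::real)" "sqrt (17::real) < 41232/10000"
proof -
  show "404/100 < sqrt (17::real)" by (rule real_less_rsqrt) (simp add: power2_eq_square)
  have "sqrt (17::real) < sqrt ((41232/10000)\<^sup>2)" by (rule real_sqrt_less_mono) (simp add: power2_eq_square)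
  thus "sqrt (17::real) < 41232/10000" by simp
qed

lemma main_from_numerics:
  assumes N1: "R (1/2) < 1" and N2: "R (1/2) > 706/1000" and N3: "R (63/100) > 1"
    and N4: "pK (3/5) + \<bar>P1 (3/5)\<bar> / 10 < 107/100"
  shows "(pK \<longlongrightarrow> 1) (at_right 0)
    \<and> strict_mono_on {0<..1/2} pK
    \<and> (\<forall>x y. (1 + sqrt 17) / 8 \<le> x \<longrightarrow> x < y \<longrightarrow> pK y < pK x)
    \<and> (pK \<longlongrightarrow> 0) at_top
    \<and> (\<exists>C c. C > 0 \<and> c > 0 \<and> (\<forall>\<^sub>F x in at_top. \<bar>pK x\<bar> \<le> C * exp (- c * x)))
    \<and> (\<exists>p' p''. (\<forall>x>0. (pK has_real_derivative p' x) (at x))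
              \<and> (\<forall>x>0. (p' has_real_derivative p'' x) (at x))
              \<and> (\<forall>x\<in>{1/2..(1 + sqrt 17) / 8}. p'' x < 0))
    \<and> (\<exists>x0\<in>{1/2<..<(1 + sqrt 17) / 8}.
          (\<forall>x>0. x \<noteq> x0 \<longrightarrow> pK x < pK x0)
        \<and> {x\<in>{1/2<..<(1 + sqrt 17) / 8}. besselK 0 x = x * besselK 1 x} = {x0}
        \<and> pK x0 < 1.07)"
proof -
  define b :: real where "b = (1 + sqrt 17) / 8"
  have b1: "63/100 < b" "b < 6404/10000" unfolding b_def using sqrt17 by auto
  have Rlt: "R x < 1" if "0 < x" "x \<le> 1/2" for x
    using R_mono_le[of x "1/2"] that N1 by linarith
  have Rgt: "R x > 1" if "63/100 \<le> x" for x
    using R_mono_le[of "63/100" x] that N3 by linarith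
  have Rgt2: "R x > 706/1000" if "1/2 \<le> x" for x
    using R_mono_le[of "1/2" x] that N2 by linarith
  have smono: "strict_mono_on {0<..1/2} pK"
  proof (rule strict_mono_onI)
    fix x y :: real assume xy: "x \<in> {0<..1/2}" "y \<in> {0<..1/2}" "x < y"
    obtain z where z: "x < z" "z < y" "pK y - pK x = (y - x) * P1 z"
      using MVT2[OF xy(3), of pK P1] pK_deriv xy by force
    have "P1 z > 0" using z xy by (intro P1_pos Rlt) auto
    hence "0 < (y - x) * P1 z" using z by (intro mult_pos_pos) auto
    thus "pK x < pK y" using z by linarith
  qed
  have decr: "\<forall>x y. b \<le> x \<longrightarrow> x < y \<longrightarrow> pK y < pK x"
  proof (intro allI impI)
    fix x y :: real assume xy: "b \<le> x" "x < y"
    obtain z where z: "x < z" "z < y" "pK y - pK x = (y - x) * P1 z"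
      using MVT2[OF xy(2), of pK P1] pK_deriv xy b1 by force
    have "P1 z < 0" using z xy b1 by (intro P1_neg Rgt) auto
    hence "(y - x) * P1 z < 0" using z by (intro mult_pos_neg) auto
    thus "pK y < pK x" using z by linarith
  qed
  have P2neg: "\<forall>x\<in>{1/2..b}. P2 x < 0"
  proof
    fix x assume x: "x \<in> {1/2..b}"
    have "x\<^sup>2 \<le> b\<^sup>2" using x by (intro power_mono) auto
    also have "\<dots> < (6404/10000)\<^sup>2" using b1 by (intro power_strict_mono) auto
    also have "(6404/10000::real)\<^sup>2 = 41011216/100000000" by (simp add: power2_eq_square)
    finally have "x\<^sup>2 < 41011216/100000000" .
    hence "1 + x\<^sup>2 - 2 * R x < 0" using Rgt2[of x] x by simp
    thus "P2 x < 0" using x J0_pos[of x] by (simp add: P2_R mult_pos_neg)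
  qed
  obtain x0 where x0: "1/2 \<le> x0" "x0 \<le> 63/100" "R x0 = 1"
    using IVT[of R "1/2" 1 "63/100"] N1 N3 R_cont by force
  have "x0 \<noteq> 1/2"
  proof
    assume "x0 = 1/2"
    hence "R x0 = R (1/2)" by (rule arg_cong)
    thus False using x0(3) N1 by simp
  qed
  moreover have "x0 \<noteq> 63/100"
  proof
    assume "x0 = 63/100"
    hence "R x0 = R (63/100)" by (rule arg_cong)
    thus False using x0(3) N3 by simp
  qed
  ultimately have x0': "1/2 < x0" "x0 < 63/100" using x0 by (simp_all add: order.order_iff_strict)
  have mem0: "x0 \<in> {1/2<..<b}" using x0' b1 by simp
  have Rlt0: "R x < 1" if "0 < x" "x < x0" for x using R_mono[OF that] x0 by simp
  have Rgt0: "R x > 1" if "x0 < x" for x using R_mono[OF _ that] x0' x0 by simp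
  have pmax: "\<forall>x>0. x \<noteq> x0 \<longrightarrow> pK x < pK x0"
  proof (intro allI impI)
    fix x :: real assume x: "x > 0" "x \<noteq> x0"
    show "pK x < pK x0"
    proof (cases "x < x0")
      case True
      obtain z where z: "x < z" "z < x0" "pK x0 - pK x = (x0 - x) * P1 z"
        using MVT2[OF True, of pK P1] pK_deriv x by force
      have "P1 z > 0" using z x by (intro P1_pos Rlt0) auto
      hence "0 < (x0 - x) * P1 z" using z by (intro mult_pos_pos) auto
      thus ?thesis using z by linarith
    next
      case False
      hence lt: "x0 < x" using x by simp
      obtain z where z: "x0 < z" "z < x" "pK x - pK x0 = (x - x0) * P1 z"
        using MVT2[OF lt, of pK P1] pK_deriv x0' by force
      have "P1 z < 0" using z x0' by (intro P1_neg Rgt0) auto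
      hence "(x - x0) * P1 z < 0" using z by (intro mult_pos_neg) auto
      thus ?thesis using z by linarith
    qed
  qed
  have setx0: "{x\<in>{1/2<..<b}. besselK 0 x = x * besselK 1 x} = {x0}"
  proof -
    have eqv: "besselK 0 x = x * besselK 1 x \<longleftrightarrow> R x = 1" if xp: "x > 0" for x
    proof -
      have "J 0 x \<noteq> 0" using J0_pos[OF xp] by simp
      hence "R x = 1 \<longleftrightarrow> x * J 1 x = J 0 x" unfolding R_def by (simp add: divide_eq_eq)
      thus ?thesis unfolding besselK_J[OF xp] by linarith
    qed
    have uniq: "x = x0" if xp: "x > 0" and rx: "R x = 1" for x
    proof (cases x x0 rule: linorder_cases)
      case less thus ?thesis using R_mono[OF xp less] rx x0(3) by simp
    next
      case greater thus ?thesis using R_mono[OF _ greater] x0' rx x0(3) by simp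
    qed simp
    have x0p: "x0 > 0" using x0' by simp
    show ?thesis
    proof
      show "{x\<in>{1/2<..<b}. besselK 0 x = x * besselK 1 x} \<subseteq> {x0}"
      proof
        fix x assume "x \<in> {x\<in>{1/2<..<b}. besselK 0 x = x * besselK 1 x}"
        hence xp: "x > 0" and e: "besselK 0 x = x * besselK 1 x" by auto
        show "x \<in> {x0}" using uniq[OF xp] eqv[OF xp] e by simp
      qed
      show "{x0} \<subseteq> {x\<in>{1/2<..<b}. besselK 0 x = x * besselK 1 x}"
        using mem0 eqv[OF x0p] x0(3) by simp
    qed
  qed
  \<comment> \<open>value at the maximum via concavity\<close>
  have P1dec: "P1 v \<le> P1 u" if "1/2 \<le> u" "u \<le> v" "v \<le> b" for u v
  proof (cases "u = v")
    case False
    hence uv: "u < v" using that by simp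
    have dd: "(P1 has_real_derivative P2 y) (at y)" if "u \<le> y" "y \<le> v" for y
      by (rule P1_deriv) (use that \<open>1/2 \<le> u\<close> in linarith)
    obtain z where z: "u < z" "z < v" "P1 v - P1 u = (v - u) * P2 z"
      using MVT2[OF uv dd] by blast
    have "z \<in> {1/2..b}" using z that by simp
    hence "P2 z < 0" using P2neg by blast
    hence "(v - u) * P2 z < 0" using z by (intro mult_pos_neg) auto
    thus ?thesis using z by linarith
  qed simp
  have conc: "pK x0 \<le> pK (3/5) + P1 (3/5) * (x0 - 3/5)"
  proof (cases x0 "3/5::real" rule: linorder_cases)
    case less
    obtain z where z: "x0 < z" "z < 3/5" "pK (3/5) - pK x0 = (3/5 - x0) * P1 z"
      using MVT2[OF less, of pK P1] pK_deriv x0' by force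
    have "P1 (3/5) \<le> P1 z" using z x0' b1 by (intro P1dec) auto
    hence "(3/5 - x0) * P1 (3/5) \<le> (3/5 - x0) * P1 z" using less by (intro mult_left_mono) auto
    thus ?thesis using z by (simp add: algebra_simps)
  next
    case greater
    obtain z where z: "3/5 < z" "z < x0" "pK x0 - pK (3/5) = (x0 - 3/5) * P1 z"
      using MVT2[OF greater, of pK P1] pK_deriv by force
    have "P1 z \<le> P1 (3/5)" using z x0' b1 by (intro P1dec) auto
    hence "(x0 - 3/5) * P1 z \<le> (x0 - 3/5) * P1 (3/5)" using greater by (intro mult_left_mono) auto
    thus ?thesis using z by (simp add: algebra_simps)
  next
    case equal
    show ?thesis unfolding equal by simp
  qed
  have "P1 (3/5) * (x0 - 3/5) \<le> \<bar>P1 (3/5)\<bar> * \<bar>x0 - 3/5\<bar>" unfolding abs_mult[symmetric] by (rule abs_ge_self)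
  also have "\<dots> \<le> \<bar>P1 (3/5)\<bar> * (1/10)"
  proof (intro mult_left_mono)
    show "\<bar>x0 - 3/5\<bar> \<le> 1/10" by (rule abs_leI) (use x0' in linarith)+
  qed simp
  finally have pval: "pK x0 < 1.07" using conc N4 by simp
  have ex1: "\<exists>C c. C > 0 \<and> c > 0 \<and> (\<forall>\<^sub>F x in at_top. \<bar>pK x\<bar> \<le> C * exp (- c * x))"
  proof (rule exI[of _ "1::real"], rule exI[of _ "1/2::real"])
    show "(1::real) > 0 \<and> (1/2::real) > 0 \<and> (\<forall>\<^sub>F x in at_top. \<bar>pK x\<bar> \<le> 1 * exp (- (1/2) * x))"
      by (rule conjI[OF _ conjI[OF _ pK_exp_bound]]) simp_all
  qed
  have d1: "\<forall>x>0. (pK has_real_derivative P1 x) (at x)" using pK_deriv by blast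
  have d2: "\<forall>x>0. (P1 has_real_derivative P2 x) (at x)" using P1_deriv by blast
  have ex2: "\<exists>p' p''. (\<forall>x>0. (pK has_real_derivative p' x) (at x))
              \<and> (\<forall>x>0. (p' has_real_derivative p'' x) (at x))
              \<and> (\<forall>x\<in>{1/2..b}. p'' x < 0)"
    by (rule exI[of _ P1], rule exI[of _ P2], rule conjI[OF d1 conjI[OF d2 P2neg]])
  have mem: "x0 \<in> {1/2<..<b}" using x0' b1 by simp
  have ex3: "\<exists>x0\<in>{1/2<..<b}.
          (\<forall>x>0. x \<noteq> x0 \<longrightarrow> pK x < pK x0)
        \<and> {x\<in>{1/2<..<b}. besselK 0 x = x * besselK 1 x} = {x0}
        \<and> pK x0 < 1.07"
    using mem conjI[OF pmax conjI[OF setx0 pval]] by blast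
  show ?thesis
    unfolding b_def[symmetric]
    by (rule conjI[OF pK_lim0 conjI[OF smono conjI[OF decr conjI[OF pK_lim_top conjI[OF ex1 conjI[OF ex2 ex3]]]]]])
qed

lemma exp_neg_upper: fixes w :: real assumes "w \<ge> 0" "odd N"
  shows "exp (-w) \<le> (\<Sum>m<N. (-w)^m / fact m)"
proof -
  obtain s where s: "exp (-w) = (\<Sum>m<N. (-w) ^ m / fact m) + exp s / fact N * (-w) ^ N"
    using Maclaurin_exp_le[of "-w" N] by blast
  have "(-w) ^ N \<le> 0" using assms by (simp add: power_minus_odd)
  hence "exp s / fact N * (-w) ^ N \<le> 0" by (intro mult_nonneg_nonpos) auto
  thus ?thesis using s by linarith
qed

lemma exp_neg_lower: fixes w :: real assumes "w \<ge> 0" "even N"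
  shows "(\<Sum>m<N. (-w)^m / fact m) \<le> exp (-w)"
proof -
  obtain s where s: "exp (-w) = (\<Sum>m<N. (-w) ^ m / fact m) + exp s / fact N * (-w) ^ N"
    using Maclaurin_exp_le[of "-w" N] by blast
  have "(-w) ^ N \<ge> 0" using assms by (simp add: power_minus_even)
  hence "exp s / fact N * (-w) ^ N \<ge> 0" by simp
  thus ?thesis using s by linarith
qed

lemma exp_neg_pow_bound: fixes w :: real assumes "w > 0"
  shows "exp (-w) \<le> fact M / w ^ M"
proof -
  have "w ^ M / fact M \<le> exp w" by (rule exp_ge_pow) (use assms in simp)
  hence "w ^ M \<le> fact M * exp w" by (simp add: field_simps)
  hence "w ^ M * exp (-w) \<le> fact M * exp w * exp (-w)" by (intro mult_right_mono) auto
  hence "w ^ M * exp (-w) \<le> fact M" by (simp add: mult.assoc flip: exp_add)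
  thus ?thesis using assms by (simp add: field_simps)
qed

definition G1 :: "real \<Rightarrow> int \<Rightarrow> real" where
  "G1 r k = (if k = 0 then 0 else (r powi k - 1) / of_int k)"
definition G0 :: "int \<Rightarrow> real" where
  "G0 k = (if k = 0 then 1 else 0)"

lemma exp_int_integral:
  fixes r :: real assumes r: "r \<ge> 1"
  shows "((\<lambda>t. exp (of_int k * t)) has_integral (G1 r k + G0 k * ln r)) {0..ln r}"
proof (cases "k = 0")
  case True
  have "((\<lambda>t. 1::real) has_integral (ln r - 0)) {0..ln r}"
    by (rule fundamental_theorem_of_calculus) (use r in \<open>auto intro!: derivative_eq_intros simp: has_real_derivative_iff_has_vector_derivative[symmetric]\<close>)
  thus ?thesis using True by (simp add: G1_def G0_def)
next
  case False
  have "((\<lambda>t. exp (of_int k * t)) has_integral (exp (of_int k * ln r) / of_int k - exp (of_int k * 0) / of_int k)) {0..ln r}"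
    by (rule fundamental_theorem_of_calculus) (use r False in \<open>auto intro!: derivative_eq_intros simp: has_real_derivative_iff_has_vector_derivative[symmetric]\<close>)
  moreover have "exp (of_int k * ln r) = r powi k"
    using r powr_real_of_int'[of r k] by (simp add: powr_def mult.commute)
  ultimately show ?thesis using False by (simp add: G1_def G0_def diff_divide_distrib)
qed

definition cf :: "real \<Rightarrow> nat \<Rightarrow> real" where "cf a m = (-a)^m / fact m"

definition SS :: "nat \<Rightarrow> nat \<Rightarrow> nat \<Rightarrow> real \<Rightarrow> real \<Rightarrow> real" where
  "SS NP NQ j a r = (\<Sum>m<NP. \<Sum>i<NQ. cf a m * cf a i * G1 r (int m - int i - int j))"
definition S0 :: "nat \<Rightarrow> nat \<Rightarrow> nat \<Rightarrow> real \<Rightarrow> real" where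
  "S0 NP NQ j a = (\<Sum>m<NP. \<Sum>i<NQ. cf a m * cf a i * G0 (int m - int i - int j))"

definition polyf :: "nat \<Rightarrow> nat \<Rightarrow> nat \<Rightarrow> real \<Rightarrow> real \<Rightarrow> real" where
  "polyf NP NQ j a t = (\<Sum>m<NP. \<Sum>i<NQ. cf a m * cf a i * exp (of_int (int m - int i - int j) * t))"

lemma polyf_integral:
  assumes r: "r \<ge> 1"
  shows "(polyf NP NQ j a has_integral (SS NP NQ j a r + S0 NP NQ j a * ln r)) {0..ln r}"
proof -
  have "((\<lambda>t. \<Sum>m<NP. \<Sum>i<NQ. cf a m * cf a i * exp (of_int (int m - int i - int j) * t)) has_integral
        (\<Sum>m<NP. \<Sum>i<NQ. cf a m * cf a i * (G1 r (int m - int i - int j) + G0 (int m - int i - int j) * ln r))) {0..ln r}"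
    by (intro has_integral_sum finite_lessThan has_integral_mult_right exp_int_integral r)
  moreover have "(\<Sum>m<NP. \<Sum>i<NQ. cf a m * cf a i * (G1 r (int m - int i - int j) + G0 (int m - int i - int j) * ln r))
      = SS NP NQ j a r + S0 NP NQ j a * ln r"
    unfolding SS_def S0_def by (simp add: sum.distrib sum_distrib_left sum_distrib_right algebra_simps)
  ultimately show ?thesis unfolding polyf_def[abs_def] by simp
qed

lemma polyf_eq:
  "(\<Sum>m<NP. cf a m * exp t ^ m) * (\<Sum>i<NQ. cf a i * exp (-t) ^ i) * exp (- (of_nat j * t)) = polyf NP NQ j a t"
proof -
  have "(\<Sum>m<NP. cf a m * exp t ^ m) * (\<Sum>i<NQ. cf a i * exp (-t) ^ i) * exp (- (of_nat j * t))
      = (\<Sum>m<NP. \<Sum>i<NQ. (cf a m * exp t ^ m) * (cf a i * exp (-t) ^ i)) * exp (- (of_nat j * t))"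
    by (simp only: sum_product)
  also have "\<dots> = (\<Sum>m<NP. \<Sum>i<NQ. (cf a m * exp t ^ m) * (cf a i * exp (-t) ^ i) * exp (- (of_nat j * t)))"
    by (simp only: sum_distrib_right)
  also have "\<dots> = (\<Sum>m<NP. \<Sum>i<NQ. cf a m * cf a i * (exp t ^ m * exp (-t) ^ i * exp (- (of_nat j * t))))"
    by (intro sum.cong refl) (simp only: mult_ac)
  also have "\<dots> = polyf NP NQ j a t"
    unfolding polyf_def
  proof (intro sum.cong refl)
    fix m i
    have "exp (of_nat m * t + of_nat i * (-t) + (- (of_nat j * t))) = exp (of_nat m * t) * exp (of_nat i * (-t)) * exp (- (of_nat j * t))"
      by (simp only: exp_add)
    also have "\<dots> = exp t ^ m * exp (-t) ^ i * exp (- (of_nat j * t))" by (simp only: exp_of_nat_mult)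
    finally have "exp t ^ m * exp (-t) ^ i * exp (- (of_nat j * t)) = exp (of_nat m * t + of_nat i * (-t) + (- (of_nat j * t)))" ..
    also have "of_nat m * t + of_nat i * (-t) + (- (of_nat j * t)) = of_int (int m - int i - int j) * t"
      by (simp add: algebra_simps)
    finally show "cf a m * cf a i * (exp t ^ m * exp (-t) ^ i * exp (- (of_nat j * t))) = cf a m * cf a i * exp (of_int (int m - int i - int j) * t)"
      by simp
  qed
  finally show ?thesis .
qed

lemma exp_split: fixes a t :: real shows "exp (- (2*a) * cosh t) = exp (- (a * exp t)) * exp (- (a * exp (-t)))"
proof -
  have c2: "2 * cosh t = exp t + exp (-t)" by (simp add: cosh_field_def)
  have "- (2*a) * cosh t = - (a * (2 * cosh t))" by (simp add: mult_ac)
  also have "\<dots> = - (a * exp t) + - (a * exp (-t))" by (simp only: c2 distrib_left minus_add_distrib)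
  finally show ?thesis by (simp only: exp_add)
qed

lemma cf_sum: fixes a z :: real shows "(\<Sum>m<N. (-(a*z))^m / fact m) = (\<Sum>m<N. cf a m * z^m)"
proof (intro sum.cong refl)
  fix m
  have "-(a*z) = (-a)*z" by simp
  thus "(-(a*z))^m / fact m = cf a m * z^m" unfolding cf_def by (simp only: power_mult_distrib) simp
qed

lemma pw_upper:
  fixes a t :: real assumes a: "a > 0" and NP: "odd NP" and NQ: "odd NQ"
  shows "exp (- (of_nat j * t)) * exp (- (2*a) * cosh t) \<le> polyf NP NQ j a t"
proof -
  have e1: "exp (- (a * exp t)) \<le> (\<Sum>m<NP. cf a m * exp t ^ m)"
    using exp_neg_upper[of "a * exp t" NP] a NP unfolding cf_sum by simp
  have e2: "exp (- (a * exp (-t))) \<le> (\<Sum>i<NQ. cf a i * exp (-t) ^ i)"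
    using exp_neg_upper[of "a * exp (-t)" NQ] a NQ unfolding cf_sum by simp
  have "exp (- (a * exp t)) * exp (- (a * exp (-t))) \<le> (\<Sum>m<NP. cf a m * exp t ^ m) * (\<Sum>i<NQ. cf a i * exp (-t) ^ i)"
    by (rule mult_mono[OF e1 e2 order_trans[OF exp_ge_zero e1] exp_ge_zero])
  hence "exp (- (a * exp t)) * exp (- (a * exp (-t))) * exp (- (of_nat j * t)) \<le>
      (\<Sum>m<NP. cf a m * exp t ^ m) * (\<Sum>i<NQ. cf a i * exp (-t) ^ i) * exp (- (of_nat j * t))"
    by (rule mult_right_mono) simp
  thus ?thesis unfolding polyf_eq exp_split by (simp add: mult_ac)
qed

lemma pw_lower:
  fixes a t :: real assumes a: "a > 0" "a \<le> 1" and NP: "even NP" and t: "t \<ge> 0"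
  shows "polyf NP 4 j a t \<le> exp (- (of_nat j * t)) * exp (- (2*a) * cosh t)"
proof -
  have e1: "(\<Sum>m<NP. cf a m * exp t ^ m) \<le> exp (- (a * exp t))"
    using exp_neg_lower[of "a * exp t" NP] a NP unfolding cf_sum by simp
  have e2: "(\<Sum>i<4. cf a i * exp (-t) ^ i) \<le> exp (- (a * exp (-t)))"
    using exp_neg_lower[of "a * exp (-t)" 4] a unfolding cf_sum by simp
  have q0: "0 \<le> (\<Sum>i<4. cf a i * exp (-t) ^ i)"
  proof -
    define y where "y = a * exp (-t)"
    have y: "0 \<le> y" "y \<le> 1"
    proof -
      show "0 \<le> y" using a by (simp add: y_def)
      have "exp (-t) \<le> 1" using t by simp
      hence "a * exp (-t) \<le> 1 * 1" using a by (intro mult_mono) auto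
      thus "y \<le> 1" unfolding y_def by simp
    qed
    have "(\<Sum>i<4. cf a i * exp (-t) ^ i) = (\<Sum>i<4. (-y)^i / fact i)"
      unfolding y_def cf_sum[symmetric] by simp
    also have "\<dots> = 1 - y + y^2/2 - y^3/6"
      by (simp add: eval_nat_numeral field_simps)
    also have "\<dots> \<ge> 0"
    proof -
      have "y^3 \<le> y^2" using y by (simp add: power_decreasing)
      moreover have "y^2 \<le> y" using y by (simp add: power2_eq_square mult_left_le_one_le)
      moreover have "0 \<le> y^2" by simp
      ultimately show ?thesis using y by linarith
    qed
    finally show ?thesis .
  qed
  have "(\<Sum>m<NP. cf a m * exp t ^ m) * (\<Sum>i<4. cf a i * exp (-t) ^ i) \<le> exp (- (a * exp t)) * exp (- (a * exp (-t)))"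
    by (rule mult_mono[OF e1 e2 exp_ge_zero q0])
  hence "(\<Sum>m<NP. cf a m * exp t ^ m) * (\<Sum>i<4. cf a i * exp (-t) ^ i) * exp (- (of_nat j * t)) \<le>
      exp (- (a * exp t)) * exp (- (a * exp (-t))) * exp (- (of_nat j * t))"
    by (rule mult_right_mono) simp
  thus ?thesis unfolding polyf_eq exp_split by (simp add: mult_ac)
qed

lemma pw_tail:
  fixes a t :: real assumes a: "a > 0" and t: "t \<ge> 0"
  shows "exp (- (of_nat j * t)) * exp (- (2*a) * cosh t) \<le> fact M / a ^ M * exp (- (real M * t))"
proof -
  have e1: "exp (- (of_nat j * t)) \<le> 1" using t by simp
  have e2: "exp (- (a * exp (-t))) \<le> 1" using a by simp
  have "exp (- (of_nat j * t)) * exp (- (2*a) * cosh t) = exp (- (a * exp t)) * (exp (- (of_nat j * t)) * exp (- (a * exp (-t))))"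
    unfolding exp_split by (simp only: mult_ac)
  also have "\<dots> \<le> exp (- (a * exp t)) * (1 * 1)"
    by (intro mult_left_mono mult_mono e1 e2) auto
  also have "\<dots> \<le> fact M / (a * exp t) ^ M"
    using exp_neg_pow_bound[of "a * exp t" M] a by simp
  also have "(a * exp t) ^ M = a ^ M * exp (real M * t)"
    by (simp add: power_mult_distrib exp_of_nat_mult)
  also have "fact M / (a ^ M * exp (real M * t)) = fact M / a ^ M * exp (- (real M * t))"
    by (simp add: exp_minus field_simps)
  finally show ?thesis .
qed

lemma F_bound:
  fixes a t :: real assumes a: "a > 0" and t: "t \<ge> 0"
  shows "\<bar>exp (- (of_nat j * t)) * exp (- (2*a) * cosh t)\<bar> \<le> 1 * exp (- (2*a) * t)"
proof -
  have "exp (- (of_nat j * t)) \<le> 1" using t by simp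
  moreover have "exp (- (2*a) * cosh t) \<le> exp (- (2*a) * t)" using a cosh_ge_t[of t] by simp
  ultimately have "exp (- (of_nat j * t)) * exp (- (2*a) * cosh t) \<le> 1 * exp (- (2*a) * t)"
    by (intro mult_mono) auto
  thus ?thesis by simp
qed

lemma F_integrable:
  fixes a :: real assumes a: "a > 0"
  shows "(\<lambda>t. exp (- (of_nat j * t)) * exp (- (2*a) * cosh t)) integrable_on {0..}"
  by (rule integrable_exp_bound[where C=1 and b="2*a"]) (use a F_bound[OF a] in \<open>auto intro!: continuous_intros\<close>)

lemma split_integral:
  fixes f :: "real \<Rightarrow> real" assumes f: "f integrable_on {0..}" and c: "continuous_on {0..} f" and T: "T \<ge> 0"
    and bd: "\<And>t. t \<ge> 0 \<Longrightarrow> \<bar>f t\<bar> \<le> C * exp (-b*t)" and b: "b > 0"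
  shows "integral {0..} f = integral {0..T} f + integral {T..} f"
    "f integrable_on {0..T}" "f integrable_on {T..}"
proof -
  show i1: "f integrable_on {0..T}" by (rule integrable_on_subinterval[OF f]) (use T in auto)
  show i2: "f integrable_on {T..}"
    by (rule integrable_exp_bound[where C=C and b=b]) (use c T bd b in \<open>auto intro: continuous_on_subset\<close>)
  have "{0..T} \<union> {T..} = {0..}" using T by auto
  moreover have "negligible ({0..T} \<inter> {T..})" using T by (subgoal_tac "{0..T} \<inter> {T..} = {T}") auto
  ultimately show "integral {0..} f = integral {0..T} f + integral {T..} f" using integral_Un[OF i1 i2] by simp
qed

lemma int_upper:
  fixes a r :: real assumes a: "a > 0" and NP: "odd NP" and NQ: "odd NQ" and r: "r \<ge> 1" and M: "M \<ge> 1"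
  shows "integral {0..} (\<lambda>t. exp (- (of_nat j * t)) * exp (- (2*a) * cosh t))
    \<le> SS NP NQ j a r + S0 NP NQ j a * ln r + fact M / a ^ M / (real M * r ^ M)"
proof -
  define f where "f = (\<lambda>t::real. exp (- (of_nat j * t)) * exp (- (2*a) * cosh t))"
  have fi: "f integrable_on {0..}" unfolding f_def by (rule F_integrable[OF a])
  have fc: "continuous_on {0..} f" unfolding f_def by (intro continuous_intros)
  have lr: "ln r \<ge> 0" using r by simp
  have a2: "2*a > 0" using a by simp
  have fb: "\<And>t. t \<ge> 0 \<Longrightarrow> \<bar>f t\<bar> \<le> 1 * exp (- (2*a) * t)" unfolding f_def by (rule F_bound) (use a in auto)
  note sp = split_integral[OF fi fc lr fb a2]
  have "integral {0..ln r} f \<le> integral {0..ln r} (polyf NP NQ j a)"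
    by (rule integral_le[OF sp(2) has_integral_integrable[OF polyf_integral[OF r]]]) (use pw_upper[OF a NP NQ] in \<open>auto simp: f_def\<close>)
  also have "\<dots> = SS NP NQ j a r + S0 NP NQ j a * ln r" by (rule integral_unique[OF polyf_integral[OF r]])
  finally have h: "integral {0..ln r} f \<le> SS NP NQ j a r + S0 NP NQ j a * ln r" .
  have Mp: "real M > 0" using M by simp
  have ti: "((\<lambda>t. fact M / a ^ M * exp (- real M * t)) has_integral (fact M / a ^ M * (exp (- real M * ln r) / real M))) {ln r..}"
    by (rule has_integral_mult_right[OF has_integral_exp_minus_to_infinity[OF Mp]])
  have "integral {ln r..} f \<le> integral {ln r..} (\<lambda>t. fact M / a ^ M * exp (- real M * t))"
    by (rule integral_le[OF sp(3)]) (use ti pw_tail[OF a] lr in \<open>auto simp: f_def\<close>)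
  also have "\<dots> = fact M / a ^ M * (exp (- real M * ln r) / real M)" by (rule integral_unique[OF ti])
  also have "exp (- real M * ln r) = 1 / r ^ M"
    using r by (simp add: exp_minus exp_of_nat_mult inverse_eq_divide)
  finally have t: "integral {ln r..} f \<le> fact M / a ^ M / (real M * r ^ M)" by (simp add: mult.commute)
  show ?thesis using sp(1) h t unfolding f_def by linarith
qed

lemma int_lower:
  fixes a r :: real assumes a: "a > 0" "a \<le> 1" and NP: "even NP" and r: "r \<ge> 1"
  shows "SS NP 4 j a r + S0 NP 4 j a * ln r \<le> integral {0..} (\<lambda>t. exp (- (of_nat j * t)) * exp (- (2*a) * cosh t))"
proof -
  define f where "f = (\<lambda>t::real. exp (- (of_nat j * t)) * exp (- (2*a) * cosh t))"
  have fi: "f integrable_on {0..}" unfolding f_def by (rule F_integrable[OF a(1)])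
  have fc: "continuous_on {0..} f" unfolding f_def by (intro continuous_intros)
  have lr: "ln r \<ge> 0" using r by simp
  have a2: "2*a > 0" using a by simp
  have fb: "\<And>t. t \<ge> 0 \<Longrightarrow> \<bar>f t\<bar> \<le> 1 * exp (- (2*a) * t)" unfolding f_def by (rule F_bound) (use a in auto)
  note sp = split_integral[OF fi fc lr fb a2]
  have "SS NP 4 j a r + S0 NP 4 j a * ln r = integral {0..ln r} (polyf NP 4 j a)" by (rule integral_unique[OF polyf_integral[OF r], symmetric])
  also have "\<dots> \<le> integral {0..ln r} f"
    by (rule integral_le[OF has_integral_integrable[OF polyf_integral[OF r]] sp(2)]) (use pw_lower[OF a NP] in \<open>auto simp: f_def\<close>)
  also have "\<dots> \<le> integral {0..} f"
    by (rule integral_subset_le[OF _ sp(2) fi]) (auto simp: f_def)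
  finally show ?thesis unfolding f_def .
qed

lemma J0_F: fixes a :: real shows "J 0 (2*a) = integral {0..} (\<lambda>t. exp (- (of_nat 0 * t)) * exp (- (2*a) * cosh t))"
  unfolding J_def by simp

lemma A_F: fixes a :: real shows "A (2*a) = integral {0..} (\<lambda>t. exp (- (of_nat 1 * t)) * exp (- (2*a) * cosh t))"
  unfolding A_def by simp

lemma exp_pos_lower: fixes y :: real assumes "y \<ge> 0"
  shows "(\<Sum>m<N. y^m / fact m) \<le> exp y"
proof -
  obtain s where s: "exp y = (\<Sum>m<N. y ^ m / fact m) + exp s / fact N * y ^ N"
    using Maclaurin_exp_le[of y N] by blast
  have "exp s / fact N * y ^ N \<ge> 0" using assms by simp
  thus ?thesis using s by linarith
qed

lemma ln2_bounds: "69314/100000 \<le> ln (2::real)" "ln (2::real) \<le> 69315/100000"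
proof -
  have "(\<Sum>m<12. (-(69314/100000::real))^m / fact m) \<le> exp (-(69314/100000))"
    by (rule exp_neg_lower; simp)
  moreover have "1/2 \<le> (\<Sum>m<12. (-(69314/100000::real))^m / fact m)"
    by (simp add: lessThan_nat_numeral fact_numeral power_numeral_even power_numeral_odd Let_def)
  ultimately have "1/2 \<le> exp (-(69314/100000::real))" by linarith
  hence "exp (69314/100000::real) \<le> 2" by (simp add: exp_minus field_simps)
  hence "ln (exp (69314/100000::real)) \<le> ln 2" by (subst ln_le_cancel_iff) auto
  thus "69314/100000 \<le> ln (2::real)" by simp
  have "2 \<le> (\<Sum>m<12. (69315/100000::real)^m / fact m)"
    by (simp add: lessThan_nat_numeral fact_numeral power_numeral_even power_numeral_odd Let_def)
  also have "\<dots> \<le> exp (69315/100000)" using exp_pos_lower[of "69315/100000" 12] by simp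
  finally have "ln 2 \<le> ln (exp (69315/100000::real))" by (subst ln_le_cancel_iff) auto
  thus "ln (2::real) \<le> 69315/100000" by simp
qed

lemma ln32_bounds: "5 * (69314/100000) \<le> ln (32::real)" "ln (32::real) \<le> 5 * (69315/100000)"
proof -
  have "ln (32::real) = ln (2^5)" by simp
  also have "\<dots> = 5 * ln 2" using ln_realpow[of 2 5] by simp
  finally show "5 * (69314/100000) \<le> ln (32::real)" "ln (32::real) \<le> 5 * (69315/100000)"
    using ln2_bounds by linarith+
qed

lemma SS_x12_0_up: "SS 21 3 0 (1/4) 32 \<le> (-2754458513/1000000000)"
  by (simp add: SS_def cf_def G1_def lessThan_nat_numeral fact_numeral power_numeral_even power_numeral_odd Let_def)

lemma S0_x12_0_up: "S0 21 3 0 (1/4) = (1089/1024)"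
  by (simp add: S0_def cf_def G0_def lessThan_nat_numeral fact_numeral power_numeral_even power_numeral_odd Let_def)

lemma x12_0_up: "J 0 (1/2) \<le> (232899/250000)"
proof -
  have "J 0 (1/2) = integral {0..} (\<lambda>t. exp (- (of_nat 0 * t)) * exp (- (2*(1/4)) * cosh t))"
    using J0_F[of "(1/4)"] by simp
  also have "\<dots> \<le> SS 21 3 0 (1/4) 32 + S0 21 3 0 (1/4) * ln 32 + fact 8 / (1/4) ^ 8 / (real 8 * 32 ^ 8)"
    by (rule int_upper) auto
  finally have h1: "J 0 (1/2) \<le> SS 21 3 0 (1/4) 32 + S0 21 3 0 (1/4) * ln 32 + fact 8 / (1/4) ^ 8 / (real 8 * 32 ^ 8)" .
  have h2: "fact 8 / (1/4) ^ 8 / (real 8 * 32 ^ 8) \<le> ((31/100000)::real)"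
    by (simp add: lessThan_nat_numeral fact_numeral power_numeral_even power_numeral_odd Let_def)
  have h3: "S0 21 3 0 (1/4) * ln 32 \<le> (1089/1024) * (5 * (69315/100000))"
    unfolding S0_x12_0_up using ln32_bounds by (intro mult_left_mono) auto
  show ?thesis using h1 h2 h3 SS_x12_0_up by linarith
qed

lemma SS_x12_0_lo: "(-1389293957/500000000) \<le> SS 20 4 0 (1/4) 32"
  by (simp add: SS_def cf_def G1_def lessThan_nat_numeral fact_numeral power_numeral_even power_numeral_odd Let_def)

lemma S0_x12_0_lo: "S0 20 4 0 (1/4) = (156817/147456)"
  by (simp add: S0_def cf_def G0_def lessThan_nat_numeral fact_numeral power_numeral_even power_numeral_odd Let_def)

lemma x12_0_lo: "(453563/500000) \<le> J 0 (1/2)"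
proof -
  have "(156817/147456) * (5 * (69314/100000)) \<le> S0 20 4 0 (1/4) * ln 32"
    unfolding S0_x12_0_lo using ln32_bounds by (intro mult_left_mono) auto
  hence "(453563/500000) \<le> SS 20 4 0 (1/4) 32 + S0 20 4 0 (1/4) * ln 32"
    using SS_x12_0_lo by linarith
  also have "\<dots> \<le> integral {0..} (\<lambda>t. exp (- (of_nat 0 * t)) * exp (- (2*(1/4)) * cosh t))"
    by (rule int_lower) auto
  also have "\<dots> = J 0 (1/2)"
    using J0_F[of "(1/4)"] by simp
  finally show ?thesis .
qed

lemma SS_x12_1_up: "SS 21 3 1 (1/4) 32 \<le> (668912151/500000000)"
  by (simp add: SS_def cf_def G1_def lessThan_nat_numeral fact_numeral power_numeral_even power_numeral_odd Let_def)

lemma S0_x12_1_up: "S0 21 3 1 (1/4) = (-3169/12288)"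
  by (simp add: S0_def cf_def G0_def lessThan_nat_numeral fact_numeral power_numeral_even power_numeral_odd Let_def)

lemma x12_1_up: "A (1/2) \<le> (6943/15625)"
proof -
  have "A (1/2) = integral {0..} (\<lambda>t. exp (- (of_nat 1 * t)) * exp (- (2*(1/4)) * cosh t))"
    using A_F[of "(1/4)"] by simp
  also have "\<dots> \<le> SS 21 3 1 (1/4) 32 + S0 21 3 1 (1/4) * ln 32 + fact 8 / (1/4) ^ 8 / (real 8 * 32 ^ 8)"
    by (rule int_upper) auto
  finally have h1: "A (1/2) \<le> SS 21 3 1 (1/4) 32 + S0 21 3 1 (1/4) * ln 32 + fact 8 / (1/4) ^ 8 / (real 8 * 32 ^ 8)" .
  have h2: "fact 8 / (1/4) ^ 8 / (real 8 * 32 ^ 8) \<le> ((31/100000)::real)"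
    by (simp add: lessThan_nat_numeral fact_numeral power_numeral_even power_numeral_odd Let_def)
  have h3: "S0 21 3 1 (1/4) * ln 32 \<le> (-3169/12288) * (5 * (69314/100000))"
    unfolding S0_x12_1_up using ln32_bounds by (intro mult_left_mono_neg) auto
  show ?thesis using h1 h2 h3 SS_x12_1_up by linarith
qed

lemma SS_x12_1_lo: "(83536473/62500000) \<le> SS 20 4 1 (1/4) 32"
  by (simp add: SS_def cf_def G1_def lessThan_nat_numeral fact_numeral power_numeral_even power_numeral_odd Let_def)

lemma S0_x12_1_lo: "S0 20 4 1 (1/4) = (-608449/2359296)"
  by (simp add: S0_def cf_def G0_def lessThan_nat_numeral fact_numeral power_numeral_even power_numeral_odd Let_def)

lemma x12_1_lo: "(221393/500000) \<le> A (1/2)"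
proof -
  have "(-608449/2359296) * (5 * (69315/100000)) \<le> S0 20 4 1 (1/4) * ln 32"
    unfolding S0_x12_1_lo using ln32_bounds by (intro mult_left_mono_neg) auto
  hence "(221393/500000) \<le> SS 20 4 1 (1/4) 32 + S0 20 4 1 (1/4) * ln 32"
    using SS_x12_1_lo by linarith
  also have "\<dots> \<le> integral {0..} (\<lambda>t. exp (- (of_nat 1 * t)) * exp (- (2*(1/4)) * cosh t))"
    by (rule int_lower) auto
  also have "\<dots> = A (1/2)"
    using A_F[of "(1/4)"] by simp
  finally show ?thesis .
qed

lemma SS_x63_0_up: "SS 27 3 0 (63/200) 32 \<le> (-3074302213/1000000000)"
  by (simp add: SS_def cf_def G1_def lessThan_nat_numeral fact_numeral power_numeral_even power_numeral_odd Let_def)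

lemma S0_x63_0_up: "S0 27 3 0 (63/200) = (7050792961/6400000000)"
  by (simp add: S0_def cf_def G0_def lessThan_nat_numeral fact_numeral power_numeral_even power_numeral_odd Let_def)

lemma x63_0_up: "J 0 (63/100) \<le> (185977/250000)"
proof -
  have "J 0 (63/100) = integral {0..} (\<lambda>t. exp (- (of_nat 0 * t)) * exp (- (2*(63/200)) * cosh t))"
    using J0_F[of "(63/200)"] by simp
  also have "\<dots> \<le> SS 27 3 0 (63/200) 32 + S0 27 3 0 (63/200) * ln 32 + fact 10 / (63/200) ^ 10 / (real 10 * 32 ^ 10)"
    by (rule int_upper) auto
  finally have h1: "J 0 (63/100) \<le> SS 27 3 0 (63/200) 32 + S0 27 3 0 (63/200) * ln 32 + fact 10 / (63/200) ^ 10 / (real 10 * 32 ^ 10)" .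
  have h2: "fact 10 / (63/200) ^ 10 / (real 10 * 32 ^ 10) \<le> ((1/25000)::real)"
    by (simp add: lessThan_nat_numeral fact_numeral power_numeral_even power_numeral_odd Let_def)
  have h3: "S0 27 3 0 (63/200) * ln 32 \<le> (7050792961/6400000000) * (5 * (69315/100000))"
    unfolding S0_x63_0_up using ln32_bounds by (intro mult_left_mono) auto
  show ?thesis using h1 h2 h3 SS_x63_0_up by linarith
qed

lemma SS_x63_0_lo: "(-3087115933/1000000000) \<le> SS 26 4 0 (63/200) 32"
  by (simp add: SS_def cf_def G1_def lessThan_nat_numeral fact_numeral power_numeral_even power_numeral_odd Let_def)

lemma S0_x63_0_lo: "S0 26 4 0 (63/200) = (282038665495801/256000000000000)"
  by (simp add: S0_def cf_def G0_def lessThan_nat_numeral fact_numeral power_numeral_even power_numeral_odd Let_def)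

lemma x63_0_lo: "(182773/250000) \<le> J 0 (63/100)"
proof -
  have "(282038665495801/256000000000000) * (5 * (69314/100000)) \<le> S0 26 4 0 (63/200) * ln 32"
    unfolding S0_x63_0_lo using ln32_bounds by (intro mult_left_mono) auto
  hence "(182773/250000) \<le> SS 26 4 0 (63/200) 32 + S0 26 4 0 (63/200) * ln 32"
    using SS_x63_0_lo by linarith
  also have "\<dots> \<le> integral {0..} (\<lambda>t. exp (- (of_nat 0 * t)) * exp (- (2*(63/200)) * cosh t))"
    by (rule int_lower) auto
  also have "\<dots> = J 0 (63/100)"
    using J0_F[of "(63/200)"] by simp
  finally show ?thesis .
qed

lemma SS_x63_1_up: "SS 27 3 1 (63/200) 32 \<le> (1520880841/1000000000)"
  by (simp add: SS_def cf_def G1_def lessThan_nat_numeral fact_numeral power_numeral_even power_numeral_odd Let_def)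

lemma S0_x63_1_up: "S0 27 3 1 (63/200) = (-423534572181/1280000000000)"
  by (simp add: S0_def cf_def G0_def lessThan_nat_numeral fact_numeral power_numeral_even power_numeral_odd Let_def)

lemma x63_1_up: "A (63/100) \<le> (46771/125000)"
proof -
  have "A (63/100) = integral {0..} (\<lambda>t. exp (- (of_nat 1 * t)) * exp (- (2*(63/200)) * cosh t))"
    using A_F[of "(63/200)"] by simp
  also have "\<dots> \<le> SS 27 3 1 (63/200) 32 + S0 27 3 1 (63/200) * ln 32 + fact 10 / (63/200) ^ 10 / (real 10 * 32 ^ 10)"
    by (rule int_upper) auto
  finally have h1: "A (63/100) \<le> SS 27 3 1 (63/200) 32 + S0 27 3 1 (63/200) * ln 32 + fact 10 / (63/200) ^ 10 / (real 10 * 32 ^ 10)" .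
  have h2: "fact 10 / (63/200) ^ 10 / (real 10 * 32 ^ 10) \<le> ((1/25000)::real)"
    by (simp add: lessThan_nat_numeral fact_numeral power_numeral_even power_numeral_odd Let_def)
  have h3: "S0 27 3 1 (63/200) * ln 32 \<le> (-423534572181/1280000000000) * (5 * (69314/100000))"
    unfolding S0_x63_1_up using ln32_bounds by (intro mult_left_mono_neg) auto
  show ?thesis using h1 h2 h3 SS_x63_1_up by linarith
qed

lemma SS_x63_1_lo: "(1519647583/1000000000) \<le> SS 26 4 1 (63/200) 32"
  by (simp add: SS_def cf_def G1_def lessThan_nat_numeral fact_numeral power_numeral_even power_numeral_odd Let_def)

lemma S0_x63_1_lo: "S0 26 4 1 (63/200) = (-67765969213475463/204800000000000000)"
  by (simp add: S0_def cf_def G0_def lessThan_nat_numeral fact_numeral power_numeral_even power_numeral_odd Let_def)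

lemma x63_1_lo: "(37287/100000) \<le> A (63/100)"
proof -
  have "(-67765969213475463/204800000000000000) * (5 * (69315/100000)) \<le> S0 26 4 1 (63/200) * ln 32"
    unfolding S0_x63_1_lo using ln32_bounds by (intro mult_left_mono_neg) auto
  hence "(37287/100000) \<le> SS 26 4 1 (63/200) 32 + S0 26 4 1 (63/200) * ln 32"
    using SS_x63_1_lo by linarith
  also have "\<dots> \<le> integral {0..} (\<lambda>t. exp (- (of_nat 1 * t)) * exp (- (2*(63/200)) * cosh t))"
    by (rule int_lower) auto
  also have "\<dots> = A (63/100)"
    using A_F[of "(63/200)"] by simp
  finally show ?thesis .
qed

lemma SS_x6_0_up: "SS 27 3 0 (3/10) 32 \<le> (-3005393633/1000000000)"
  by (simp add: SS_def cf_def G1_def lessThan_nat_numeral fact_numeral power_numeral_even power_numeral_odd Let_def)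

lemma S0_x6_0_up: "S0 27 3 0 (3/10) = (43681/40000)"
  by (simp add: S0_def cf_def G0_def lessThan_nat_numeral fact_numeral power_numeral_even power_numeral_odd Let_def)

lemma x6_0_up: "J 0 (3/5) \<le> (779353/1000000)"
proof -
  have "J 0 (3/5) = integral {0..} (\<lambda>t. exp (- (of_nat 0 * t)) * exp (- (2*(3/10)) * cosh t))"
    using J0_F[of "(3/10)"] by simp
  also have "\<dots> \<le> SS 27 3 0 (3/10) 32 + S0 27 3 0 (3/10) * ln 32 + fact 10 / (3/10) ^ 10 / (real 10 * 32 ^ 10)"
    by (rule int_upper) auto
  finally have h1: "J 0 (3/5) \<le> SS 27 3 0 (3/10) 32 + S0 27 3 0 (3/10) * ln 32 + fact 10 / (3/10) ^ 10 / (real 10 * 32 ^ 10)" .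
  have h2: "fact 10 / (3/10) ^ 10 / (real 10 * 32 ^ 10) \<le> ((3/50000)::real)"
    by (simp add: lessThan_nat_numeral fact_numeral power_numeral_even power_numeral_odd Let_def)
  have h3: "S0 27 3 0 (3/10) * ln 32 \<le> (43681/40000) * (5 * (69315/100000))"
    unfolding S0_x6_0_up using ln32_bounds by (intro mult_left_mono) auto
  show ?thesis using h1 h2 h3 SS_x6_0_up by linarith
qed

lemma SS_x6_0_lo: "(-3009707597/1000000000) \<le> SS 26 4 0 (3/10) 32"
  by (simp add: SS_def cf_def G1_def lessThan_nat_numeral fact_numeral power_numeral_even power_numeral_odd Let_def)

lemma S0_x6_0_lo: "S0 26 4 0 (3/10) = (4368181/4000000)"
  by (simp add: S0_def cf_def G0_def lessThan_nat_numeral fact_numeral power_numeral_even power_numeral_odd Let_def)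

lemma x6_0_lo: "(774993/1000000) \<le> J 0 (3/5)"
proof -
  have "(4368181/4000000) * (5 * (69314/100000)) \<le> S0 26 4 0 (3/10) * ln 32"
    unfolding S0_x6_0_lo using ln32_bounds by (intro mult_left_mono) auto
  hence "(774993/1000000) \<le> SS 26 4 0 (3/10) 32 + S0 26 4 0 (3/10) * ln 32"
    using SS_x6_0_lo by linarith
  also have "\<dots> \<le> integral {0..} (\<lambda>t. exp (- (of_nat 0 * t)) * exp (- (2*(3/10)) * cosh t))"
    by (rule int_lower) auto
  also have "\<dots> = J 0 (3/5)"
    using J0_F[of "(3/10)"] by simp
  finally show ?thesis .
qed

lemma SS_x6_1_up: "SS 27 3 1 (3/10) 32 \<le> (738050917/500000000)"
  by (simp add: SS_def cf_def G1_def lessThan_nat_numeral fact_numeral power_numeral_even power_numeral_odd Let_def)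

lemma S0_x6_1_up: "S0 27 3 1 (3/10) = (-125481/400000)"
  by (simp add: S0_def cf_def G0_def lessThan_nat_numeral fact_numeral power_numeral_even power_numeral_odd Let_def)

lemma x6_1_up: "A (3/5) \<le> (97241/250000)"
proof -
  have "A (3/5) = integral {0..} (\<lambda>t. exp (- (of_nat 1 * t)) * exp (- (2*(3/10)) * cosh t))"
    using A_F[of "(3/10)"] by simp
  also have "\<dots> \<le> SS 27 3 1 (3/10) 32 + S0 27 3 1 (3/10) * ln 32 + fact 10 / (3/10) ^ 10 / (real 10 * 32 ^ 10)"
    by (rule int_upper) auto
  finally have h1: "A (3/5) \<le> SS 27 3 1 (3/10) 32 + S0 27 3 1 (3/10) * ln 32 + fact 10 / (3/10) ^ 10 / (real 10 * 32 ^ 10)" .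
  have h2: "fact 10 / (3/10) ^ 10 / (real 10 * 32 ^ 10) \<le> ((3/50000)::real)"
    by (simp add: lessThan_nat_numeral fact_numeral power_numeral_even power_numeral_odd Let_def)
  have h3: "S0 27 3 1 (3/10) * ln 32 \<le> (-125481/400000) * (5 * (69314/100000))"
    unfolding S0_x6_1_up using ln32_bounds by (intro mult_left_mono_neg) auto
  show ?thesis using h1 h2 h3 SS_x6_1_up by linarith
qed

lemma SS_x6_1_lo: "(1475240697/1000000000) \<le> SS 26 4 1 (3/10) 32"
  by (simp add: SS_def cf_def G1_def lessThan_nat_numeral fact_numeral power_numeral_even power_numeral_odd Let_def)

lemma S0_x6_1_lo: "S0 26 4 1 (3/10) = (-50192643/160000000)"
  by (simp add: S0_def cf_def G0_def lessThan_nat_numeral fact_numeral power_numeral_even power_numeral_odd Let_def)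

lemma x6_1_lo: "(19401/50000) \<le> A (3/5)"
proof -
  have "(-50192643/160000000) * (5 * (69315/100000)) \<le> S0 26 4 1 (3/10) * ln 32"
    unfolding S0_x6_1_lo using ln32_bounds by (intro mult_left_mono_neg) auto
  hence "(19401/50000) \<le> SS 26 4 1 (3/10) 32 + S0 26 4 1 (3/10) * ln 32"
    using SS_x6_1_lo by linarith
  also have "\<dots> \<le> integral {0..} (\<lambda>t. exp (- (of_nat 1 * t)) * exp (- (2*(3/10)) * cosh t))"
    by (rule int_lower) auto
  also have "\<dots> = A (3/5)"
    using A_F[of "(3/10)"] by simp
  finally show ?thesis .
qed

lemma exp_x12: "(60653/100000) \<le> exp (- ((1/2)::real))" "exp (- ((1/2)::real)) \<le> (606531/1000000)"
proof -
  have "(60653/100000) \<le> (\<Sum>m<14. (- ((1/2)::real))^m / fact m)" by (simp add: lessThan_nat_numeral fact_numeral power_numeral_even power_numeral_odd Let_def)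
  also have "\<dots> \<le> exp (- (1/2))" by (rule exp_neg_lower; simp)
  finally show "(60653/100000) \<le> exp (- ((1/2)::real))" .
  have "exp (- ((1/2)::real)) \<le> (\<Sum>m<13. (- ((1/2)::real))^m / fact m)" by (rule exp_neg_upper; simp)
  also have "\<dots> \<le> (606531/1000000)" by (simp add: lessThan_nat_numeral fact_numeral power_numeral_even power_numeral_odd Let_def)
  finally show "exp (- ((1/2)::real)) \<le> (606531/1000000)" .
qed

lemma exp_x63: "(532591/1000000) \<le> exp (- ((63/100)::real))" "exp (- ((63/100)::real)) \<le> (33287/62500)"
proof -
  have "(532591/1000000) \<le> (\<Sum>m<14. (- ((63/100)::real))^m / fact m)" by (simp add: lessThan_nat_numeral fact_numeral power_numeral_even power_numeral_odd Let_def)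
  also have "\<dots> \<le> exp (- (63/100))" by (rule exp_neg_lower; simp)
  finally show "(532591/1000000) \<le> exp (- ((63/100)::real))" .
  have "exp (- ((63/100)::real)) \<le> (\<Sum>m<13. (- ((63/100)::real))^m / fact m)" by (rule exp_neg_upper; simp)
  also have "\<dots> \<le> (33287/62500)" by (simp add: lessThan_nat_numeral fact_numeral power_numeral_even power_numeral_odd Let_def)
  finally show "exp (- ((63/100)::real)) \<le> (33287/62500)" .
qed

lemma exp_x6: "(548811/1000000) \<le> exp (- ((3/5)::real))" "exp (- ((3/5)::real)) \<le> (137203/250000)"
proof -
  have "(548811/1000000) \<le> (\<Sum>m<14. (- ((3/5)::real))^m / fact m)" by (simp add: lessThan_nat_numeral fact_numeral power_numeral_even power_numeral_odd Let_def)
  also have "\<dots> \<le> exp (- (3/5))" by (rule exp_neg_lower; simp)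
  finally show "(548811/1000000) \<le> exp (- ((3/5)::real))" .
  have "exp (- ((3/5)::real)) \<le> (\<Sum>m<13. (- ((3/5)::real))^m / fact m)" by (rule exp_neg_upper; simp)
  also have "\<dots> \<le> (137203/250000)" by (simp add: lessThan_nat_numeral fact_numeral power_numeral_even power_numeral_odd Let_def)
  finally show "exp (- ((3/5)::real)) \<le> (137203/250000)" .
qed

lemma xJ1: fixes x :: real assumes x: "x > 0" shows "x * J 1 x = exp (-x) + x * A x"
  using J1_decomp[OF x] x by (simp add: field_simps)

lemma R_via: fixes x :: real assumes x: "x > 0" shows "R x = (exp (-x) + x * A x) / J 0 x"
  unfolding R_def using xJ1[OF x] by simp

lemma N1: "R (1/2) < 1"
proof -
  have "exp (-(1/2)) + (1/2) * A (1/2) < J 0 (1/2)"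
    using exp_x12 x12_0_lo x12_1_up by linarith
  thus ?thesis unfolding R_via[of "1/2", simplified] using J0_pos[of "1/2"] by (simp add: divide_less_eq)
qed

lemma N2: "R (1/2) > 706/1000"
proof -
  have "706/1000 * J 0 (1/2) < exp (-(1/2)) + (1/2) * A (1/2)"
    using exp_x12 x12_0_up x12_1_lo by linarith
  thus ?thesis unfolding R_via[of "1/2", simplified] using J0_pos[of "1/2"] by (simp add: less_divide_eq)
qed

lemma N3: "R (63/100) > 1"
proof -
  have "J 0 (63/100) < exp (-(63/100)) + (63/100) * A (63/100)"
    using exp_x63 x63_0_up x63_1_lo by linarith
  thus ?thesis unfolding R_via[of "63/100", simplified] using J0_pos[of "63/100"] by (simp add: less_divide_eq)
qed

lemma N4: "pK (3/5) + \<bar>P1 (3/5)\<bar> / 10 < 107/100"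
proof -
  have p: "pK (3/5) = exp (-(3/5)) + 3/5 * A (3/5) + 9/25 * J 0 (3/5)"
    using pK_alt[of "3/5"] by (simp add: power2_eq_square)
  have q: "P1 (3/5) = 3/5 * J 0 (3/5) - 3/5 * (exp (-(3/5)) + 3/5 * A (3/5))"
  proof -
    have e: "(3/5) * J 1 (3/5) = exp (-(3/5)) + 3/5 * A (3/5)" by (rule xJ1) simp
    have "P1 (3/5) = 3/5 * J 0 (3/5) - 3/5 * ((3/5) * J 1 (3/5))" unfolding P1_def by (simp add: power2_eq_square)
    thus ?thesis unfolding e .
  qed
  have "\<bar>P1 (3/5)\<bar> \<le> (107961/25000000)"
    unfolding q
  proof (rule abs_leI)
    show "3/5 * J 0 (3/5) - 3/5 * (exp (-(3/5)) + 3/5 * A (3/5)) \<le> 107961/25000000"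
      using exp_x6 x6_0_up x6_0_lo x6_1_up x6_1_lo by (simp add: algebra_simps)
    show "- (3/5 * J 0 (3/5) - 3/5 * (exp (-(3/5)) + 3/5 * A (3/5))) \<le> 107961/25000000"
      using exp_x6 x6_0_up x6_0_lo x6_1_up x6_1_lo by (simp add: algebra_simps)
  qed
  moreover have "pK (3/5) \<le> (137203/250000) + 3/5 * (97241/250000) + 9/25 * (779353/1000000)"
    unfolding p using exp_x6 x6_0_up x6_1_up by linarith
  ultimately show ?thesis by linarith
qed

theorem lemma2p4:
  shows "(pK \<longlongrightarrow> 1) (at_right 0)
    \<and> strict_mono_on {0<..1/2} pK
    \<and> (\<forall>x y. (1 + sqrt 17) / 8 \<le> x \<longrightarrow> x < y \<longrightarrow> pK y < pK x)
    \<and> (pK \<longlongrightarrow> 0) at_top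
    \<and> (\<exists>C c. C > 0 \<and> c > 0 \<and> (\<forall>\<^sub>F x in at_top. \<bar>pK x\<bar> \<le> C * exp (- c * x)))
    \<and> (\<exists>p' p''. (\<forall>x>0. (pK has_real_derivative p' x) (at x))
              \<and> (\<forall>x>0. (p' has_real_derivative p'' x) (at x))
              \<and> (\<forall>x\<in>{1/2..(1 + sqrt 17) / 8}. p'' x < 0))
    \<and> (\<exists>x0\<in>{1/2<..<(1 + sqrt 17) / 8}.
          (\<forall>x>0. x \<noteq> x0 \<longrightarrow> pK x < pK x0)
        \<and> {x\<in>{1/2<..<(1 + sqrt 17) / 8}. besselK 0 x = x * besselK 1 x} = {x0}
        \<and> pK x0 < 1.07)"
    by (rule main_from_numerics[OF N1 N2 N3 N4])

end
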